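(* Let $G$ be a complex Banach space and $T\in B(G)$ a scalar type spectral operator with spectrum $\sigma(T)$. Let $V$ be an open neighbourhood of $\sigma(T)$ in $\mathbb C$ and $l\in(0,+\infty]$ such that $]-l,l[\cdot V\subseteq V$, and let $F:V\to\mathbb C$ be analytic. Let $n,p\in\mathbb Z$, $n,p\ge1$, let $W\subseteq\mathbb R^n$ be open and $g\in\mathcal C^p(W,\mathbb R)$ with $g(W)\subseteq\,]-l,l[$. Define $\zeta^T_{F,g}:W\to B(G)$, $x\mapsto F_{g(x)}(T)$, where $F_t(\lambda):=F(t\lambda)$ for $\lambda\in V$, $t\in]-l,l[$, and $F_t(T)$ is given by the Borel functional calculus of $T$ (applied to $F_t\upharpoonright\sigma(T)$). Then $\zeta^T_{F,g}\in\mathcal C^p(W,B(G))$ (with respect to the norm topology of $B(G)$), and for every $i\in\{1,\dots,n\}$ $$\frac{\partial\zeta^T_{F,g}}{\partial e_i}=\frac{\partial g}{\partial e_i}\cdot T\,\zeta^T_{\frac{dF}{d\lambda},g},$$ where $\zeta^T_{\frac{dF}{d\lambda},g}(x)=\big(\tfrac{dF}{d\lambda}\big)_{g(x)}(T)$.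
   Context: A bounded scalar type spectral operator $T$ (Dunford–Schwartz Ch. XV) has a resolution of the identity $E$, a projection-valued measure on the Borel sets of $\mathbb C$, countably additive in the strong operator topology, supported on $\sigma(T)$, with $T=\int\lambda\,dE$; for a bounded Borel function $f$ on $\sigma(T)$, $f(T)=\int f\,dE\in B(G)$. $e_i$ is the $i$-th standard basis vector of $\mathbb R^n$. *)

theory Defs
  imports "HOL-Analysis.Analysis"
begin

class complex_normed_vector = real_normed_vector +
  fixes scaleC :: "complex \<Rightarrow> 'a \<Rightarrow> 'a" (infixr \<open>*\<^sub>C\<close> 75)
  assumes scaleC_of_real: "scaleC (complex_of_real r) x = r *\<^sub>R x"
    and scaleC_add_right: "scaleC a (x + y) = scaleC a x + scaleC a y"
    and scaleC_add_left: "scaleC (a + b) x = scaleC a x + scaleC b x"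
    and scaleC_scaleC: "scaleC a (scaleC b x) = scaleC (a * b) x"
    and scaleC_one: "scaleC 1 x = x"
    and norm_scaleC: "norm (scaleC a x) = cmod a * norm x"


text \<open>B(G) is rendered as the bounded (real-)linear operators G \<Rightarrow>L G that are
  in addition complex-linear.\<close>

definition complex_linear_op :: "('g::complex_normed_vector \<Rightarrow>\<^sub>L 'g) \<Rightarrow> bool" where
  "complex_linear_op L \<longleftrightarrow> (\<forall>c x. blinfun_apply L (c *\<^sub>C x) = c *\<^sub>C blinfun_apply L x)"

definition cscale_op :: "complex \<Rightarrow> ('g::complex_normed_vector \<Rightarrow>\<^sub>L 'g) \<Rightarrow> ('g \<Rightarrow>\<^sub>L 'g)" where
  "cscale_op c L = Blinfun (\<lambda>x. c *\<^sub>C blinfun_apply L x)"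

definition shift_op :: "complex \<Rightarrow> ('g::complex_normed_vector \<Rightarrow>\<^sub>L 'g) \<Rightarrow> ('g \<Rightarrow>\<^sub>L 'g)" where
  "shift_op w T = Blinfun (\<lambda>x. w *\<^sub>C x - blinfun_apply T x)"

definition op_spectrum :: "('g::complex_normed_vector \<Rightarrow>\<^sub>L 'g) \<Rightarrow> complex set" where
  "op_spectrum T = {w. \<not> (\<exists>S. S o\<^sub>L shift_op w T = id_blinfun \<and> shift_op w T o\<^sub>L S = id_blinfun)}"

definition spectral_measure :: "(complex set \<Rightarrow> ('g::complex_normed_vector \<Rightarrow>\<^sub>L 'g)) \<Rightarrow> bool" where
  "spectral_measure E \<longleftrightarrow>
     (\<forall>A \<in> sets borel. complex_linear_op (E A)) \<and>
     E {} = 0 \<and> E UNIV = id_blinfun \<and>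
     (\<forall>A \<in> sets borel. \<forall>B \<in> sets borel. E (A \<inter> B) = E A o\<^sub>L E B) \<and>
     (\<forall>A :: nat \<Rightarrow> complex set. range A \<subseteq> sets borel \<longrightarrow> disjoint_family A \<longrightarrow>
        (\<forall>x. (\<lambda>n. \<Sum>k<n. blinfun_apply (E (A k)) x) \<longlonglongrightarrow> blinfun_apply (E (\<Union>k. A k)) x))"

definition simple_borel :: "(complex \<Rightarrow> complex) \<Rightarrow> bool" where
  "simple_borel s \<longleftrightarrow> finite (range s) \<and> (\<forall>c. s -` {c} \<in> sets borel)"

definition simple_integral ::
  "(complex set \<Rightarrow> ('g::complex_normed_vector \<Rightarrow>\<^sub>L 'g)) \<Rightarrow> (complex \<Rightarrow> complex) \<Rightarrow> ('g \<Rightarrow>\<^sub>L 'g)" where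
  "simple_integral E s = (\<Sum>c\<in>range s. cscale_op c (E (s -` {c})))"

definition spectral_integral ::
  "(complex set \<Rightarrow> ('g::complex_normed_vector \<Rightarrow>\<^sub>L 'g)) \<Rightarrow> (complex \<Rightarrow> complex) \<Rightarrow> ('g \<Rightarrow>\<^sub>L 'g)" where
  "spectral_integral E f = (THE S. \<forall>s :: nat \<Rightarrow> complex \<Rightarrow> complex.
       (\<forall>k. simple_borel (s k)) \<longrightarrow> uniform_limit UNIV s f sequentially \<longrightarrow>
       (\<lambda>k. simple_integral E (s k)) \<longlonglongrightarrow> S)"

text \<open>f(T) for a function f given on \<sigma>(T) (extended by 0 off \<sigma>(T); E is supported on \<sigma>(T)).\<close>
definition fcalc ::
  "(complex set \<Rightarrow> ('g::complex_normed_vector \<Rightarrow>\<^sub>L 'g)) \<Rightarrow> ('g \<Rightarrow>\<^sub>L 'g) \<Rightarrow> (complex \<Rightarrow> complex) \<Rightarrow> ('g \<Rightarrow>\<^sub>L 'g)" where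
  "fcalc E T f = spectral_integral E (\<lambda>z. if z \<in> op_spectrum T then f z else 0)"

definition scalar_type_resolution ::
  "('g::complex_normed_vector \<Rightarrow>\<^sub>L 'g) \<Rightarrow> (complex set \<Rightarrow> ('g \<Rightarrow>\<^sub>L 'g)) \<Rightarrow> bool" where
  "scalar_type_resolution T E \<longleftrightarrow>
     complex_linear_op T \<and> spectral_measure E \<and>
     E (- op_spectrum T) = 0 \<and>
     (\<forall>A \<in> sets borel. E A o\<^sub>L T = T o\<^sub>L E A) \<and>
     T = fcalc E T (\<lambda>z. z)"

definition partial :: "'n::finite \<Rightarrow> (real^'n \<Rightarrow> 'b::real_normed_vector) \<Rightarrow> real^'n \<Rightarrow> 'b" where
  "partial i f x = vector_derivative (\<lambda>h. f (x + h *\<^sub>R axis i 1)) (at 0)"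

fun Cp :: "nat \<Rightarrow> (real^'n::finite) set \<Rightarrow> (real^'n \<Rightarrow> 'b::real_normed_vector) \<Rightarrow> bool" where
  "Cp 0 W f = continuous_on W f"
| "Cp (Suc k) W f = (continuous_on W f \<and>
      (\<forall>x\<in>W. \<forall>i. (\<lambda>h. f (x + h *\<^sub>R axis i 1)) differentiable (at 0)) \<and>
      (\<forall>i. Cp k W (partial i f)))"

end

theory Submission
  imports Defs "HOL-Complex_Analysis.Complex_Analysis"
begin

lemma scaleC_scaleR_commute: "c *\<^sub>C (r *\<^sub>R (x::'a::complex_normed_vector)) = r *\<^sub>R (c *\<^sub>C x)"
proof -
  have "c *\<^sub>C (r *\<^sub>R x) = c *\<^sub>C (complex_of_real r *\<^sub>C x)" by (simp add: scaleC_of_real)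
  also have "\<dots> = (complex_of_real r * c) *\<^sub>C x" by (simp add: scaleC_scaleC mult.commute)
  also have "\<dots> = complex_of_real r *\<^sub>C (c *\<^sub>C x)" by (simp add: scaleC_scaleC)
  finally show ?thesis by (simp add: scaleC_of_real)
qed

lemma scaleC_zero_right [simp]: "c *\<^sub>C (0::'a::complex_normed_vector) = 0"
  using scaleC_add_right[of c "0::'a" 0] by simp

lemma scaleC_zero_left [simp]: "0 *\<^sub>C (x::'a::complex_normed_vector) = 0"
  using scaleC_of_real[of 0 x] by simp

lemma scaleC_minus_right: "c *\<^sub>C (- (x::'a::complex_normed_vector)) = - (c *\<^sub>C x)"
  using scaleC_add_right[of c x "-x"] by (simp add: eq_neg_iff_add_eq_0 add.commute)

lemma scaleC_diff_right: "c *\<^sub>C ((x::'a::complex_normed_vector) - y) = c *\<^sub>C x - c *\<^sub>C y"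
  using scaleC_add_right[of c x "-y"] by (simp add: scaleC_minus_right)

lemma scaleC_diff_left: "(a - b) *\<^sub>C (x::'a::complex_normed_vector) = a *\<^sub>C x - b *\<^sub>C x"
proof -
  have "a *\<^sub>C x = (a - b) *\<^sub>C x + b *\<^sub>C x" by (simp flip: scaleC_add_left)
  then show ?thesis by (simp add: algebra_simps)
qed

lemma scaleC_sum_right: "c *\<^sub>C (\<Sum>j\<in>J. f j) = (\<Sum>j\<in>J. c *\<^sub>C (f j::'a::complex_normed_vector))"
  by (induction J rule: infinite_finite_induct) (auto simp: scaleC_add_right)

lemma scaleC_sum_left: "(\<Sum>j\<in>J. f j) *\<^sub>C (x::'a::complex_normed_vector) = (\<Sum>j\<in>J. f j *\<^sub>C x)"
  by (induction J rule: infinite_finite_induct) (auto simp: scaleC_add_left)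

lemma bounded_linear_scaleC_comp:
  assumes "bounded_linear f"
  shows "bounded_linear (\<lambda>x. c *\<^sub>C (f x::'a::complex_normed_vector))"
proof -
  interpret f: bounded_linear f by fact
  obtain K where K: "\<And>x. norm (f x) \<le> norm x * K" using f.bounded by blast
  show ?thesis
  proof (rule bounded_linear_intro)
    show "c *\<^sub>C f (x + y) = c *\<^sub>C f x + c *\<^sub>C f y" for x y by (simp add: f.add scaleC_add_right)
    show "c *\<^sub>C f (r *\<^sub>R x) = r *\<^sub>R (c *\<^sub>C f x)" for r x by (simp add: f.scale scaleC_scaleR_commute)
    show "norm (c *\<^sub>C f x) \<le> norm x * (cmod c * K)" for x
      using mult_left_mono[OF K[of x], of "cmod c"] by (simp add: norm_scaleC mult_ac)
  qed
qed

lemma cscale_op_apply: "blinfun_apply (cscale_op c L) x = c *\<^sub>C blinfun_apply L x"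
  unfolding cscale_op_def
  by (subst bounded_linear_Blinfun_apply) (auto intro: bounded_linear_scaleC_comp blinfun.bounded_linear_right)

lemma shift_op_apply: "blinfun_apply (shift_op w T) x = w *\<^sub>C x - blinfun_apply T x"
  unfolding shift_op_def
  by (subst bounded_linear_Blinfun_apply)
     (auto intro!: bounded_linear_sub bounded_linear_scaleC_comp[of "\<lambda>x. x", simplified] blinfun.bounded_linear_right bounded_linear_ident)

lemma norm_scaleC_le: "norm (c *\<^sub>C (x::'a::complex_normed_vector)) = cmod c * norm x"
  by (rule norm_scaleC)

section \<open>Uniform boundedness\<close>

lemma uniform_boundedness:
  fixes S :: "'i \<Rightarrow> ('a::banach \<Rightarrow>\<^sub>L 'b::real_normed_vector)"
  assumes pw: "\<And>x. \<exists>M. \<forall>i\<in>I. norm (blinfun_apply (S i) x) \<le> M"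
  shows "\<exists>M. \<forall>i\<in>I. norm (S i) \<le> M"
proof -
  define C where "C n = {x. \<forall>i\<in>I. norm (blinfun_apply (S i) x) \<le> real n}" for n :: nat
  have clo: "closed (C n)" for n
  proof -
    have "C n = (\<Inter>i\<in>I. {x. norm (blinfun_apply (S i) x) \<le> real n})" by (auto simp: C_def)
    also have "closed \<dots>"
      by (intro closed_INT ballI closed_Collect_le continuous_intros)
    finally show ?thesis .
  qed
  have un: "(\<Union>n. C n) = UNIV"
  proof -
    { fix x
      obtain M where "\<forall>i\<in>I. norm (blinfun_apply (S i) x) \<le> M" using pw by blast
      moreover obtain n :: nat where "M \<le> real n" using real_arch_simple by blast
      ultimately have "x \<in> C n" unfolding C_def using order.trans by blast
      then have "\<exists>n. x \<in> C n" by blast }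
    then show ?thesis by blast
  qed
  have "\<exists>n. interior (C n) \<noteq> {}"
  proof (rule ccontr)
    assume "\<not> ?thesis"
    then have "euclidean interior_of \<Union>(range C) = {}"
      by (intro Baire_category_alt) (auto simp: completely_metrizable_space_euclidean euclidean_interior_of closed_closedin[symmetric] clo)
    then show False by (simp add: euclidean_interior_of un)
  qed
  then obtain n x0 where "x0 \<in> interior (C n)" by blast
  then obtain r where r: "r > 0" "ball x0 r \<subseteq> C n"
    using mem_interior by blast
  have bnd: "norm (blinfun_apply (S i) y) \<le> (4 * real n / r) * norm y" if i: "i \<in> I" for i y
  proof (cases "y = 0")
    case True then show ?thesis by simp
  next
    case False
    define z where "z = x0 + ((r/2) / norm y) *\<^sub>R y"
    have "dist x0 z < r" using r False by (simp add: z_def dist_norm)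
    then have "z \<in> C n" "x0 \<in> C n" using r by auto
    then have h1: "norm (blinfun_apply (S i) z) \<le> n" "norm (blinfun_apply (S i) x0) \<le> n"
      using i by (auto simp: C_def)
    have "y = (2 * norm y / r) *\<^sub>R (z - x0)" using r False by (simp add: z_def)
    then have "blinfun_apply (S i) y = (2 * norm y / r) *\<^sub>R (blinfun_apply (S i) z - blinfun_apply (S i) x0)"
      by (metis blinfun.diff_right blinfun.scaleR_right)
    then have "norm (blinfun_apply (S i) y) = (2 * norm y / r) * norm (blinfun_apply (S i) z - blinfun_apply (S i) x0)"
      using r by simp
    also have "\<dots> \<le> (2 * norm y / r) * (2 * n)"
      using h1 r by (intro mult_left_mono) (auto intro!: order.trans[OF norm_triangle_ineq4])
    finally show ?thesis by (simp add: field_simps)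
  qed
  show ?thesis
    using r by (intro exI[of _ "4 * real n / r"] ballI norm_blinfun_bound) (use bnd in auto)
qed

locale spec =
  fixes E :: "complex set \<Rightarrow> ('g::{complex_normed_vector,banach} \<Rightarrow>\<^sub>L 'g)"
  assumes SM: "spectral_measure E"
begin

lemma E_clin: "A \<in> sets borel \<Longrightarrow> blinfun_apply (E A) (c *\<^sub>C x) = c *\<^sub>C blinfun_apply (E A) x"
  using SM unfolding spectral_measure_def complex_linear_op_def by blast

lemma E_empty [simp]: "E {} = 0" using SM unfolding spectral_measure_def by blast
lemma E_UNIV [simp]: "E UNIV = id_blinfun" using SM unfolding spectral_measure_def by blast

lemma E_Int: "A \<in> sets borel \<Longrightarrow> B \<in> sets borel \<Longrightarrow> E (A \<inter> B) = E A o\<^sub>L E B"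
  using SM unfolding spectral_measure_def by blast

lemma E_Int_apply: "A \<in> sets borel \<Longrightarrow> B \<in> sets borel \<Longrightarrow>
    blinfun_apply (E A) (blinfun_apply (E B) x) = blinfun_apply (E (A \<inter> B)) x"
  by (simp add: E_Int)

lemma E_ca: "range A \<subseteq> sets borel \<Longrightarrow> disjoint_family A \<Longrightarrow>
   (\<lambda>n. \<Sum>k<n. blinfun_apply (E (A k)) x) \<longlonglongrightarrow> blinfun_apply (E (\<Union>k. A k)) x"
  using SM unfolding spectral_measure_def by blast

lemma E_Un_apply:
  assumes "A \<in> sets borel" "B \<in> sets borel" "A \<inter> B = {}"
  shows "blinfun_apply (E (A \<union> B)) x = blinfun_apply (E A) x + blinfun_apply (E B) x"
proof -
  define C where "C k = (if k = 0 then A else if k = Suc 0 then B else {})" for k :: nat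
  have "range C \<subseteq> sets borel" using assms by (auto simp: C_def)
  moreover have "disjoint_family C" using assms by (auto simp: C_def disjoint_family_on_def)
  ultimately have L: "(\<lambda>n. \<Sum>k<n. blinfun_apply (E (C k)) x) \<longlonglongrightarrow> blinfun_apply (E (\<Union>k. C k)) x"
    by (rule E_ca)
  have U: "(\<Union>k. C k) = A \<union> B"
  proof
    show "(\<Union>k. C k) \<subseteq> A \<union> B" by (auto simp: C_def split: if_splits)
    have "C 0 = A" "C 1 = B" by (auto simp: C_def)
    then show "A \<union> B \<subseteq> (\<Union>k. C k)" by blast
  qed
  have "(\<Sum>k<n + 2. blinfun_apply (E (C k)) x) = blinfun_apply (E A) x + blinfun_apply (E B) x" for n
  proof (induction n)
    case 0 then show ?case by (simp add: C_def numeral_2_eq_2)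
  next
    case (Suc n) then show ?case by (simp add: C_def)
  qed
  then have "(\<lambda>n. blinfun_apply (E A) x + blinfun_apply (E B) x) \<longlonglongrightarrow> blinfun_apply (E (A \<union> B)) x"
    using LIMSEQ_ignore_initial_segment[OF L, of 2] U by simp
  then show ?thesis by (simp add: LIMSEQ_const_iff)
qed

lemma E_diff_apply:
  assumes "A \<in> sets borel" "B \<in> sets borel"
  shows "blinfun_apply (E (A - B)) x = blinfun_apply (E A) x - blinfun_apply (E (A \<inter> B)) x"
proof -
  have "A = (A - B) \<union> (A \<inter> B)" by blast
  then have "blinfun_apply (E A) x = blinfun_apply (E (A - B)) x + blinfun_apply (E (A \<inter> B)) x"
    using E_Un_apply[of "A - B" "A \<inter> B" x] assms by auto
  then show ?thesis by simp
qed

lemma E_UN_apply: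
  assumes "finite J" "\<And>j. j \<in> J \<Longrightarrow> A j \<in> sets borel" "disjoint_family_on A J"
  shows "blinfun_apply (E (\<Union>j\<in>J. A j)) x = (\<Sum>j\<in>J. blinfun_apply (E (A j)) x)"
  using assms
proof (induction J rule: finite_induct)
  case empty then show ?case by simp
next
  case (insert j J)
  have "blinfun_apply (E (\<Union>i\<in>insert j J. A i)) x = blinfun_apply (E (A j \<union> (\<Union>i\<in>J. A i))) x" by simp
  also have "\<dots> = blinfun_apply (E (A j)) x + blinfun_apply (E (\<Union>i\<in>J. A i)) x"
    using insert.prems insert.hyps
    by (intro E_Un_apply) (auto simp: disjoint_family_on_def)
  also have "\<dots> = blinfun_apply (E (A j)) x + (\<Sum>i\<in>J. blinfun_apply (E (A i)) x)"
    using insert by (simp add: disjoint_family_on_def)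
  finally show ?case using insert.hyps by simp
qed

lemma E_vec_bounded: "\<exists>M. \<forall>A\<in>sets borel. norm (blinfun_apply (E A) x) \<le> M"
proof (rule ccontr)
  assume nb: "\<not> ?thesis"
  define \<mu> where "\<mu> A = blinfun_apply (E A) x" for A
  define U where "U A \<longleftrightarrow> A \<in> sets borel \<and> (\<forall>M. \<exists>B\<in>sets borel. B \<subseteq> A \<and> norm (\<mu> B) > M)" for A
  have "\<forall>M. \<exists>B\<in>sets borel. norm (\<mu> B) > M" using nb unfolding \<mu>_def by (meson not_le)
  then have U0: "U UNIV" unfolding U_def by auto
  have step: "\<exists>A'. U A' \<and> A' \<subseteq> A \<and> norm (\<mu> (A - A')) \<ge> real n" if UA: "U A" for A n
  proof -
    have Ab: "A \<in> sets borel" using UA by (simp add: U_def)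
    obtain C where C: "C \<in> sets borel" "C \<subseteq> A" "norm (\<mu> C) > norm (\<mu> A) + n"
      using UA unfolding U_def by blast
    have AC: "A \<inter> C = C" using C(2) by blast
    have muAC: "\<mu> (A - C) = \<mu> A - \<mu> C"
      using E_diff_apply[OF Ab C(1), of x] unfolding AC \<mu>_def .
    have "norm (\<mu> C) - norm (\<mu> A) \<le> norm (\<mu> A - \<mu> C)"
      using norm_triangle_ineq2[of "\<mu> C" "\<mu> A"] norm_minus_commute[of "\<mu> C" "\<mu> A"] by linarith
    then have big: "norm (\<mu> (A - C)) > n"
      using C(3) unfolding muAC by linarith
    have "U C \<or> U (A - C)"
    proof (rule ccontr)
      assume "\<not> (U C \<or> U (A - C))"
      then have nU: "\<not> U C" "\<not> U (A - C)" by auto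
      have "A - C \<in> sets borel" using C(1) Ab by auto
      have "\<exists>M1. \<forall>B\<in>sets borel. B \<subseteq> C \<longrightarrow> norm (\<mu> B) \<le> M1"
      proof (rule ccontr)
        assume "\<not> ?thesis"
        then have "\<forall>M. \<exists>B\<in>sets borel. B \<subseteq> C \<and> norm (\<mu> B) > M" by (meson not_le)
        with C(1) nU(1) show False unfolding U_def by blast
      qed
      then obtain M1 where M1: "\<forall>B\<in>sets borel. B \<subseteq> C \<longrightarrow> norm (\<mu> B) \<le> M1" by blast
      have "\<exists>M2. \<forall>B\<in>sets borel. B \<subseteq> A - C \<longrightarrow> norm (\<mu> B) \<le> M2"
      proof (rule ccontr)
        assume "\<not> ?thesis"
        then have "\<forall>M. \<exists>B\<in>sets borel. B \<subseteq> A - C \<and> norm (\<mu> B) > M" by (meson not_le)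
        with \<open>A - C \<in> sets borel\<close> nU(2) show False unfolding U_def by blast
      qed
      then obtain M2 where M2: "\<forall>B\<in>sets borel. B \<subseteq> A - C \<longrightarrow> norm (\<mu> B) \<le> M2" by blast
      obtain B where B: "B \<in> sets borel" "B \<subseteq> A" "norm (\<mu> B) > M1 + M2"
        using UA unfolding U_def by blast
      have "\<mu> B = \<mu> (B \<inter> C) + \<mu> (B - C)"
        using E_diff_apply[OF B(1) C(1)] by (simp add: \<mu>_def)
      moreover have "norm (\<mu> (B \<inter> C)) \<le> M1"
        using M1 B(1) C(1) by blast
      moreover have "norm (\<mu> (B - C)) \<le> M2"
        using M2 B(1,2) C(1) by blast
      ultimately have "norm (\<mu> B) \<le> M1 + M2"
        using norm_triangle_ineq[of "\<mu> (B \<inter> C)" "\<mu> (B - C)"] by simp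
      then show False using B by simp
    qed
    then show ?thesis
    proof
      assume "U C"
      then show ?thesis using C big by (intro exI[of _ C]) auto
    next
      assume "U (A - C)"
      moreover have "A - (A - C) = C" using C by blast
      moreover have "real n \<le> norm (\<mu> C)" using C(3) norm_ge_zero[of "\<mu> A"] by linarith
      ultimately show ?thesis using C by (intro exI[of _ "A - C"]) auto
    qed
  qed
  have "\<exists>f. \<forall>n. U (f n) \<and> (f (Suc n) \<subseteq> f n \<and> norm (\<mu> (f n - f (Suc n))) \<ge> real n)"
    by (rule dependent_nat_choice) (use U0 step in auto)
  then obtain f where f: "\<And>n. U (f n)" "\<And>n. f (Suc n) \<subseteq> f n" "\<And>n. norm (\<mu> (f n - f (Suc n))) \<ge> real n"
    by blast
  define B where "B n = f n - f (Suc n)" for n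
  have dec: "f k \<subseteq> f j" if "j \<le> k" for j k
    using that
  proof (induction k)
    case 0 then show ?case by simp
  next
    case (Suc k)
    show ?case
    proof (cases "j = Suc k")
      case True then show ?thesis by simp
    next
      case False
      then have "j \<le> k" using Suc.prems by simp
      then show ?thesis using Suc.IH f(2)[of k] by blast
    qed
  qed
  have fb: "f n \<in> sets borel" for n using f(1) by (simp add: U_def)
  have "range B \<subseteq> sets borel" using fb by (auto simp: B_def)
  moreover have "disjoint_family B"
  proof (unfold disjoint_family_on_def, intro ballI impI)
    fix m n :: nat assume "m \<noteq> n"
    then consider "m < n" | "n < m" by linarith
    then show "B m \<inter> B n = {}"
    proof cases
      case 1 then have "f n \<subseteq> f (Suc m)" by (intro dec) auto
      then show ?thesis by (auto simp: B_def)
    next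
      case 2 then have "f m \<subseteq> f (Suc n)" by (intro dec) auto
      then show ?thesis by (auto simp: B_def)
    qed
  qed
  ultimately have L: "(\<lambda>n. \<Sum>k<n. \<mu> (B k)) \<longlonglongrightarrow> \<mu> (\<Union>k. B k)"
    unfolding \<mu>_def by (rule E_ca)
  have "(\<lambda>n. (\<Sum>k<Suc n. \<mu> (B k)) - (\<Sum>k<n. \<mu> (B k))) \<longlonglongrightarrow> \<mu> (\<Union>k. B k) - \<mu> (\<Union>k. B k)"
    by (intro tendsto_diff L LIMSEQ_Suc)
  then have "(\<lambda>n. \<mu> (B n)) \<longlonglongrightarrow> 0" by simp
  then have "(\<lambda>n. norm (\<mu> (B n))) \<longlonglongrightarrow> 0" using tendsto_norm by fastforce
  then have "eventually (\<lambda>n. norm (\<mu> (B n)) < 1) sequentially"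
    using order_tendstoD(2) zero_less_one by blast
  then obtain N where "\<And>n. n \<ge> N \<Longrightarrow> norm (\<mu> (B n)) < 1" by (auto simp: eventually_sequentially)
  from this[of "Suc N"] f(3)[of "Suc N"] show False by (simp add: B_def)
qed

lemma E_bounded: "\<exists>M>0. \<forall>A\<in>sets borel. norm (E A) \<le> M"
proof -
  obtain M where "\<forall>A\<in>sets borel. norm (E A) \<le> M"
    using uniform_boundedness[of "sets borel" E] E_vec_bounded by blast
  then show ?thesis by (intro exI[of _ "max M 1"]) auto
qed

end

lemma simple_borel_iff: "simple_borel s \<longleftrightarrow> simple_function borel s"
proof
  assume "simple_borel s" then show "simple_function borel s"
    by (simp add: simple_borel_def simple_function_def)
next
  assume a: "simple_function borel s"
  have "s -` {c} \<in> sets borel" for c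
  proof (cases "c \<in> range s")
    case True then show ?thesis using a by (auto simp: simple_function_def)
  next
    case False then have "s -` {c} = {}" by auto
    then show ?thesis by simp
  qed
  then show "simple_borel s" using a by (simp add: simple_borel_def simple_function_def)
qed

lemma simple_borel_add: "simple_borel s \<Longrightarrow> simple_borel t \<Longrightarrow> simple_borel (\<lambda>z. s z + t z)"
  by (simp add: simple_borel_iff)
lemma simple_borel_diff: "simple_borel s \<Longrightarrow> simple_borel t \<Longrightarrow> simple_borel (\<lambda>z. s z - t z)"
  by (simp add: simple_borel_iff)
lemma simple_borel_mult: "simple_borel s \<Longrightarrow> simple_borel t \<Longrightarrow> simple_borel (\<lambda>z. s z * t z)"
  by (simp add: simple_borel_iff)
lemma simple_borel_const: "simple_borel (\<lambda>z. c)"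
  by (simp add: simple_borel_iff)
lemma simple_borel_scale: "simple_borel s \<Longrightarrow> simple_borel (\<lambda>z. c * s z)"
  by (simp add: simple_borel_iff)

lemma scaleC_split: "c *\<^sub>C (y::'a::complex_normed_vector) = Re c *\<^sub>R y + Im c *\<^sub>R (\<i> *\<^sub>C y)"
proof -
  have "c = complex_of_real (Re c) + complex_of_real (Im c) * \<i>" by (simp add: complex_eq_iff)
  then have "c *\<^sub>C y = complex_of_real (Re c) *\<^sub>C y + complex_of_real (Im c) *\<^sub>C (\<i> *\<^sub>C y)"
    by (metis scaleC_add_left scaleC_scaleC)
  then show ?thesis by (simp add: scaleC_of_real)
qed

context spec
begin

lemma SI_apply: "blinfun_apply (simple_integral E s) x = (\<Sum>c\<in>range s. c *\<^sub>C blinfun_apply (E (s -` {c})) x)"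
  by (simp add: simple_integral_def blinfun.sum_left cscale_op_apply)

lemma SI_partition:
  assumes s: "simple_borel s" and J: "finite J" and Ab: "\<And>j. j \<in> J \<Longrightarrow> A j \<in> sets borel"
    and dis: "disjoint_family_on A J" and cov: "(\<Union>j\<in>J. A j) = UNIV"
    and v: "\<And>j z. j \<in> J \<Longrightarrow> z \<in> A j \<Longrightarrow> s z = v j"
  shows "blinfun_apply (simple_integral E s) x = (\<Sum>j\<in>J. v j *\<^sub>C blinfun_apply (E (A j)) x)"
proof -
  define J' where "J' = {j\<in>J. A j \<noteq> {}}"
  have fin: "finite (range s)" using s by (simp add: simple_borel_def)
  have J'J: "J' \<subseteq> J" and fJ': "finite J'" using J by (auto simp: J'_def)
  have "(\<Sum>j\<in>J. v j *\<^sub>C blinfun_apply (E (A j)) x) = (\<Sum>j\<in>J'. v j *\<^sub>C blinfun_apply (E (A j)) x)"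
    by (rule sum.mono_neutral_right[OF J J'J]) (auto simp: J'_def)
  also have "\<dots> = (\<Sum>c\<in>range s. \<Sum>j\<in>{j\<in>J'. v j = c}. v j *\<^sub>C blinfun_apply (E (A j)) x)"
  proof (rule sum.group[symmetric, OF fJ' fin])
    show "v ` J' \<subseteq> range s"
    proof
      fix c assume "c \<in> v ` J'"
      then obtain j where j: "j \<in> J" "A j \<noteq> {}" "c = v j" by (auto simp: J'_def)
      then obtain z where "z \<in> A j" by blast
      then show "c \<in> range s" using v j by (metis rangeI)
    qed
  qed
  also have "\<dots> = (\<Sum>c\<in>range s. c *\<^sub>C blinfun_apply (E (s -` {c})) x)"
  proof (rule sum.cong[OF refl])
    fix c assume c: "c \<in> range s"
    have "(\<Sum>j\<in>{j\<in>J'. v j = c}. v j *\<^sub>C blinfun_apply (E (A j)) x)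
        = c *\<^sub>C (\<Sum>j\<in>{j\<in>J'. v j = c}. blinfun_apply (E (A j)) x)"
      by (simp add: scaleC_sum_right)
    also have "(\<Sum>j\<in>{j\<in>J'. v j = c}. blinfun_apply (E (A j)) x) = blinfun_apply (E (\<Union>j\<in>{j\<in>J'. v j = c}. A j)) x"
      by (rule E_UN_apply[symmetric]) (use fJ' J'J Ab in \<open>auto intro: disjoint_family_on_mono[OF _ dis]\<close>)
    also have "(\<Union>j\<in>{j\<in>J'. v j = c}. A j) = s -` {c}"
    proof
      show "(\<Union>j\<in>{j\<in>J'. v j = c}. A j) \<subseteq> s -` {c}" using v J'J by auto
      show "s -` {c} \<subseteq> (\<Union>j\<in>{j\<in>J'. v j = c}. A j)"
      proof
        fix z assume z: "z \<in> s -` {c}"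
        from cov obtain j where j: "j \<in> J" "z \<in> A j" by blast
        then have "v j = c" using v z by force
        then show "z \<in> (\<Union>j\<in>{j\<in>J'. v j = c}. A j)" using j by (auto simp: J'_def)
      qed
    qed
    finally show "(\<Sum>j\<in>{j\<in>J'. v j = c}. v j *\<^sub>C blinfun_apply (E (A j)) x) = c *\<^sub>C blinfun_apply (E (s -` {c})) x" .
  qed
  finally show ?thesis by (simp add: SI_apply)
qed

definition pp :: "(complex \<Rightarrow> complex) \<Rightarrow> (complex \<Rightarrow> complex) \<Rightarrow> complex \<times> complex \<Rightarrow> complex set" where
  "pp s t j = s -` {fst j} \<inter> t -` {snd j}"

lemma pp_facts:
  assumes s: "simple_borel s" and t: "simple_borel t"
  shows "finite (range s \<times> range t)" "\<And>j. j \<in> range s \<times> range t \<Longrightarrow> pp s t j \<in> sets borel"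
    "disjoint_family_on (pp s t) (range s \<times> range t)" "(\<Union>j\<in>range s \<times> range t. pp s t j) = UNIV"
    "\<And>j z. z \<in> pp s t j \<Longrightarrow> s z = fst j" "\<And>j z. z \<in> pp s t j \<Longrightarrow> t z = snd j"
  using s t by (auto simp: simple_borel_def pp_def disjoint_family_on_def)

lemma SI_add:
  assumes s: "simple_borel s" and t: "simple_borel t"
  shows "simple_integral E (\<lambda>z. s z + t z) = simple_integral E s + simple_integral E t"
proof (rule blinfun_eqI)
  fix x
  note P = pp_facts[OF s t]
  have "blinfun_apply (simple_integral E (\<lambda>z. s z + t z)) x
     = (\<Sum>j\<in>range s \<times> range t. (fst j + snd j) *\<^sub>C blinfun_apply (E (pp s t j)) x)"
    by (rule SI_partition) (use P simple_borel_add[OF s t] in auto)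
  also have "\<dots> = (\<Sum>j\<in>range s \<times> range t. fst j *\<^sub>C blinfun_apply (E (pp s t j)) x)
      + (\<Sum>j\<in>range s \<times> range t. snd j *\<^sub>C blinfun_apply (E (pp s t j)) x)"
    by (simp add: scaleC_add_left sum.distrib)
  also have "\<dots> = blinfun_apply (simple_integral E s) x + blinfun_apply (simple_integral E t) x"
    by (subst (1 2) SI_partition[of _ "range s \<times> range t" "pp s t"]) (use P s t in auto)
  finally show "blinfun_apply (simple_integral E (\<lambda>z. s z + t z)) x = blinfun_apply (simple_integral E s + simple_integral E t) x"
    by (simp add: blinfun.add_left)
qed

lemma SI_diff:
  assumes s: "simple_borel s" and t: "simple_borel t"
  shows "simple_integral E (\<lambda>z. s z - t z) = simple_integral E s - simple_integral E t"
proof (rule blinfun_eqI)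
  fix x
  note P = pp_facts[OF s t]
  have "blinfun_apply (simple_integral E (\<lambda>z. s z - t z)) x
     = (\<Sum>j\<in>range s \<times> range t. (fst j - snd j) *\<^sub>C blinfun_apply (E (pp s t j)) x)"
    by (rule SI_partition) (use P simple_borel_diff[OF s t] in auto)
  also have "\<dots> = (\<Sum>j\<in>range s \<times> range t. fst j *\<^sub>C blinfun_apply (E (pp s t j)) x)
      - (\<Sum>j\<in>range s \<times> range t. snd j *\<^sub>C blinfun_apply (E (pp s t j)) x)"
    by (simp add: scaleC_diff_left sum_subtractf)
  also have "\<dots> = blinfun_apply (simple_integral E s) x - blinfun_apply (simple_integral E t) x"
    by (subst (1 2) SI_partition[of _ "range s \<times> range t" "pp s t"]) (use P s t in auto)
  finally show "blinfun_apply (simple_integral E (\<lambda>z. s z - t z)) x = blinfun_apply (simple_integral E s - simple_integral E t) x"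
    by (simp add: blinfun.diff_left)
qed

lemma SI_scale:
  assumes s: "simple_borel s"
  shows "simple_integral E (\<lambda>z. complex_of_real r * s z) = r *\<^sub>R simple_integral E s"
proof (rule blinfun_eqI)
  fix x
  note P = pp_facts[OF s s]
  have "blinfun_apply (simple_integral E (\<lambda>z. complex_of_real r * s z)) x
     = (\<Sum>j\<in>range s \<times> range s. (complex_of_real r * fst j) *\<^sub>C blinfun_apply (E (pp s s j)) x)"
    by (rule SI_partition) (use P simple_borel_scale[OF s] in auto)
  also have "\<dots> = r *\<^sub>R (\<Sum>j\<in>range s \<times> range s. fst j *\<^sub>C blinfun_apply (E (pp s s j)) x)"
    by (simp add: scaleR_sum_right scaleC_scaleC[symmetric] scaleC_of_real)
  also have "\<dots> = r *\<^sub>R blinfun_apply (simple_integral E s) x"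
    by (subst SI_partition[of _ "range s \<times> range s" "pp s s"]) (use P s in auto)
  finally show "blinfun_apply (simple_integral E (\<lambda>z. complex_of_real r * s z)) x = blinfun_apply (r *\<^sub>R simple_integral E s) x"
    by (simp add: blinfun.scaleR_left)
qed

lemma E_sum_scaleC:
  assumes "A \<in> sets borel"
  shows "blinfun_apply (E A) (\<Sum>k\<in>K. c k *\<^sub>C y k) = (\<Sum>k\<in>K. c k *\<^sub>C blinfun_apply (E A) (y k))"
  by (simp add: blinfun.sum_right E_clin[OF assms])

lemma SI_mult:
  assumes s: "simple_borel s" and t: "simple_borel t"
  shows "simple_integral E (\<lambda>z. s z * t z) = simple_integral E s o\<^sub>L simple_integral E t"
proof (rule blinfun_eqI)
  fix x
  note P = pp_facts[OF s t]
  let ?J = "range s \<times> range t"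
  have "blinfun_apply (simple_integral E (\<lambda>z. s z * t z)) x
     = (\<Sum>j\<in>?J. (fst j * snd j) *\<^sub>C blinfun_apply (E (pp s t j)) x)"
    by (rule SI_partition) (use P simple_borel_mult[OF s t] in auto)
  also have "\<dots> = (\<Sum>j\<in>?J. fst j *\<^sub>C (\<Sum>k\<in>?J. snd k *\<^sub>C blinfun_apply (E (pp s t j)) (blinfun_apply (E (pp s t k)) x)))"
  proof (rule sum.cong[OF refl])
    fix j assume j: "j \<in> ?J"
    have "(\<Sum>k\<in>?J. snd k *\<^sub>C blinfun_apply (E (pp s t j)) (blinfun_apply (E (pp s t k)) x))
       = (\<Sum>k\<in>?J. snd k *\<^sub>C blinfun_apply (E (pp s t j \<inter> pp s t k)) x)"
      using P j by (simp add: E_Int_apply)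
    also have "\<dots> = snd j *\<^sub>C blinfun_apply (E (pp s t j \<inter> pp s t j)) x"
    proof (rule sum.remove[OF P(1) j, THEN trans])
      have "(\<Sum>k\<in>?J - {j}. snd k *\<^sub>C blinfun_apply (E (pp s t j \<inter> pp s t k)) x) = 0"
      proof (rule sum.neutral, rule ballI)
        fix k assume "k \<in> ?J - {j}"
        then have "pp s t j \<inter> pp s t k = {}" using P(3) j unfolding disjoint_family_on_def by blast
        then show "snd k *\<^sub>C blinfun_apply (E (pp s t j \<inter> pp s t k)) x = 0" by simp
      qed
      then show "snd j *\<^sub>C blinfun_apply (E (pp s t j \<inter> pp s t j)) x + (\<Sum>k\<in>?J - {j}. snd k *\<^sub>C blinfun_apply (E (pp s t j \<inter> pp s t k)) x)
          = snd j *\<^sub>C blinfun_apply (E (pp s t j \<inter> pp s t j)) x" by simp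
    qed
    finally show "(fst j * snd j) *\<^sub>C blinfun_apply (E (pp s t j)) x
        = fst j *\<^sub>C (\<Sum>k\<in>?J. snd k *\<^sub>C blinfun_apply (E (pp s t j)) (blinfun_apply (E (pp s t k)) x))"
      by (simp add: scaleC_scaleC)
  qed
  also have "\<dots> = (\<Sum>j\<in>?J. fst j *\<^sub>C blinfun_apply (E (pp s t j)) (\<Sum>k\<in>?J. snd k *\<^sub>C blinfun_apply (E (pp s t k)) x))"
    using P by (simp add: E_sum_scaleC)
  also have "\<dots> = blinfun_apply (simple_integral E s) (blinfun_apply (simple_integral E t) x)"
    by (subst (1 2) SI_partition[of _ "?J" "pp s t"]) (use P s t in auto)
  finally show "blinfun_apply (simple_integral E (\<lambda>z. s z * t z)) x
      = blinfun_apply (simple_integral E s o\<^sub>L simple_integral E t) x"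
    by simp
qed

end

context spec
begin

definition EM :: real where "EM = (SOME M. M > 0 \<and> (\<forall>A\<in>sets borel. norm (E A) \<le> M))"

lemma EM: "EM > 0" "A \<in> sets borel \<Longrightarrow> norm (E A) \<le> EM"
  using someI_ex[OF E_bounded] unfolding EM_def by auto

lemma E_apply_bound: "A \<in> sets borel \<Longrightarrow> norm (blinfun_apply (E A) x) \<le> EM * norm x"
proof -
  assume A: "A \<in> sets borel"
  have "norm (blinfun_apply (E A) x) \<le> norm (E A) * norm x" by (rule norm_blinfun)
  also have "\<dots> \<le> EM * norm x" by (rule mult_right_mono[OF EM(2)[OF A]]) simp
  finally show ?thesis .
qed

lemma conv_bound:
  assumes "finite J"
  shows "\<lbrakk>\<forall>j\<in>J. A j \<in> sets borel; disjoint_family_on A J; P \<in> sets borel; N \<in> sets borel; P \<inter> N = {};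
     \<forall>j\<in>J. A j \<inter> P = {} \<and> A j \<inter> N = {}; \<forall>j\<in>J. \<bar>a j\<bar> \<le> 1\<rbrakk> \<Longrightarrow>
     norm (blinfun_apply (E P) x - blinfun_apply (E N) x + (\<Sum>j\<in>J. a j *\<^sub>R blinfun_apply (E (A j)) x)) \<le> 2 * EM * norm x"
  using assms
proof (induction J arbitrary: P N rule: finite_induct)
  case empty
  have "norm (blinfun_apply (E P) x - blinfun_apply (E N) x) \<le> norm (blinfun_apply (E P) x) + norm (blinfun_apply (E N) x)"
    by (rule norm_triangle_ineq4)
  also have "\<dots> \<le> EM * norm x + EM * norm x"
    using empty by (intro add_mono E_apply_bound) auto
  finally show ?case by (simp add: mult_ac)
next
  case (insert k J)
  define X where "X = blinfun_apply (E P) x - blinfun_apply (E N) x + (\<Sum>j\<in>J. a j *\<^sub>R blinfun_apply (E (A j)) x)"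
  define y where "y = blinfun_apply (E (A k)) x"
  have disJ: "disjoint_family_on A J" using insert.prems(2) disjoint_family_on_mono by blast
  have Akj: "\<forall>j\<in>J. A j \<inter> A k = {}"
    using insert.prems(2) insert.hyps(2) unfolding disjoint_family_on_def by fastforce
  have Ak: "A k \<in> sets borel" "A k \<inter> P = {}" "A k \<inter> N = {}" "\<bar>a k\<bar> \<le> 1" using insert.prems by auto
  have 1: "norm (X + y) \<le> 2 * EM * norm x"
  proof -
    have "blinfun_apply (E (P \<union> A k)) x = blinfun_apply (E P) x + y"
      unfolding y_def using Ak insert.prems by (intro E_Un_apply) auto
    moreover have "norm (blinfun_apply (E (P \<union> A k)) x - blinfun_apply (E N) x + (\<Sum>j\<in>J. a j *\<^sub>R blinfun_apply (E (A j)) x)) \<le> 2 * EM * norm x"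
      using insert.prems Ak Akj disJ by (intro insert.IH) blast+
    ultimately show ?thesis by (simp add: X_def algebra_simps)
  qed
  have 2: "norm (X - y) \<le> 2 * EM * norm x"
  proof -
    have "blinfun_apply (E (N \<union> A k)) x = blinfun_apply (E N) x + y"
      unfolding y_def using Ak insert.prems by (intro E_Un_apply) auto
    moreover have "norm (blinfun_apply (E P) x - blinfun_apply (E (N \<union> A k)) x + (\<Sum>j\<in>J. a j *\<^sub>R blinfun_apply (E (A j)) x)) \<le> 2 * EM * norm x"
      using insert.prems Ak Akj disJ by (intro insert.IH) blast+
    ultimately show ?thesis by (simp add: X_def algebra_simps)
  qed
  have e1: "(a k * 2) *\<^sub>R y = a k *\<^sub>R y + a k *\<^sub>R y"
    by (metis mult.commute scaleR_2 scaleR_scaleR)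
  have eq: "2 *\<^sub>R (X + a k *\<^sub>R y) = (1 + a k) *\<^sub>R (X + y) + (1 - a k) *\<^sub>R (X - y)"
    by (simp add: algebra_simps e1 scaleR_2)
  have "2 * norm (X + a k *\<^sub>R y) = norm ((1 + a k) *\<^sub>R (X + y) + (1 - a k) *\<^sub>R (X - y))"
    by (metis eq norm_scaleR abs_numeral)
  also have "\<dots> \<le> (1 + a k) * norm (X + y) + (1 - a k) * norm (X - y)"
    using Ak(4) by (intro order.trans[OF norm_triangle_ineq]) auto
  also have "\<dots> \<le> (1 + a k) * (2 * EM * norm x) + (1 - a k) * (2 * EM * norm x)"
    using Ak(4) 1 2 by (intro add_mono mult_left_mono) auto
  finally have "norm (X + a k *\<^sub>R y) \<le> 2 * EM * norm x" by (simp add: algebra_simps)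
  moreover have "blinfun_apply (E P) x - blinfun_apply (E N) x + (\<Sum>j\<in>insert k J. a j *\<^sub>R blinfun_apply (E (A j)) x) = X + a k *\<^sub>R y"
    using insert.hyps by (simp add: X_def y_def algebra_simps)
  ultimately show ?case by simp
qed

lemma real_bound:
  assumes "finite J" "\<forall>j\<in>J. A j \<in> sets borel" "disjoint_family_on A J" "\<forall>j\<in>J. \<bar>a j\<bar> \<le> 1"
  shows "norm (\<Sum>j\<in>J. a j *\<^sub>R blinfun_apply (E (A j)) x) \<le> 2 * EM * norm x"
  using conv_bound[OF assms(1), of A "{}" "{}" a x] assms by simp

lemma cplx_bound1:
  assumes "finite J" "\<forall>j\<in>J. A j \<in> sets borel" "disjoint_family_on A J" "\<forall>j\<in>J. cmod (c j) \<le> 1"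
  shows "norm (\<Sum>j\<in>J. c j *\<^sub>C blinfun_apply (E (A j)) x) \<le> 4 * EM * norm x"
proof -
  have "(\<Sum>j\<in>J. c j *\<^sub>C blinfun_apply (E (A j)) x)
      = (\<Sum>j\<in>J. Re (c j) *\<^sub>R blinfun_apply (E (A j)) x) + (\<Sum>j\<in>J. Im (c j) *\<^sub>R blinfun_apply (E (A j)) (\<i> *\<^sub>C x))"
  proof -
    have "c j *\<^sub>C blinfun_apply (E (A j)) x = Re (c j) *\<^sub>R blinfun_apply (E (A j)) x + Im (c j) *\<^sub>R blinfun_apply (E (A j)) (\<i> *\<^sub>C x)"
      if "j \<in> J" for j
      using scaleC_split[of "c j" "blinfun_apply (E (A j)) x"] E_clin[of "A j" \<i> x] assms(2) that by simp
    then show ?thesis by (simp add: sum.distrib[symmetric])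
  qed
  also have "norm \<dots> \<le> 2 * EM * norm x + 2 * EM * norm (\<i> *\<^sub>C x)"
  proof -
    have re: "\<forall>j\<in>J. \<bar>Re (c j)\<bar> \<le> 1" using assms(4) by (metis abs_Re_le_cmod order_trans)
    have im: "\<forall>j\<in>J. \<bar>Im (c j)\<bar> \<le> 1" using assms(4) by (metis abs_Im_le_cmod order_trans)
    show ?thesis
      by (rule order.trans[OF norm_triangle_ineq add_mono[OF real_bound[OF assms(1-3) re] real_bound[OF assms(1-3) im]]])
  qed
  finally show ?thesis by (simp add: norm_scaleC mult_ac)
qed

lemma cplx_bound:
  assumes "finite J" "\<forall>j\<in>J. A j \<in> sets borel" "disjoint_family_on A J" "\<forall>j\<in>J. cmod (c j) \<le> B" "B \<ge> 0"
  shows "norm (\<Sum>j\<in>J. c j *\<^sub>C blinfun_apply (E (A j)) x) \<le> 4 * EM * B * norm x"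
proof (cases "B = 0")
  case True
  then have "\<forall>j\<in>J. c j = 0" using assms(4) by auto
  then show ?thesis using True by simp
next
  case False
  then have B: "B > 0" using assms by simp
  have "(\<Sum>j\<in>J. c j *\<^sub>C blinfun_apply (E (A j)) x) = B *\<^sub>R (\<Sum>j\<in>J. (c j / complex_of_real B) *\<^sub>C blinfun_apply (E (A j)) x)"
    using B by (simp add: scaleR_sum_right scaleC_of_real[symmetric] scaleC_scaleC scaleC_sum_right)
  also have "norm \<dots> = B * norm (\<Sum>j\<in>J. (c j / complex_of_real B) *\<^sub>C blinfun_apply (E (A j)) x)"
    using B by simp
  also have "\<dots> \<le> B * (4 * EM * norm x)"
    using assms B by (intro mult_left_mono cplx_bound1) (auto simp: norm_divide divide_le_eq_1)
  finally show ?thesis by (simp add: mult_ac)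
qed

lemma SI_bound:
  assumes s: "simple_borel s" and B: "\<And>z. cmod (s z) \<le> B"
  shows "norm (simple_integral E s) \<le> 4 * EM * B"
proof -
  have B0: "B \<ge> 0" using B[of 0] norm_ge_zero order_trans by blast
  show ?thesis
  proof (rule norm_blinfun_bound)
    show "0 \<le> 4 * EM * B" using EM(1) B0 by simp
    fix x
    show "norm (blinfun_apply (simple_integral E s) x) \<le> 4 * EM * B * norm x"
      unfolding SI_apply using s B B0
      by (intro cplx_bound) (auto simp: simple_borel_def disjoint_family_on_def)
  qed
qed

end

lemma uniform_limit_diff':
  fixes s t :: "nat \<Rightarrow> 'a \<Rightarrow> 'b::real_normed_vector"
  assumes "uniform_limit X s f F" "uniform_limit X t g F"
  shows "uniform_limit X (\<lambda>k z. s k z - t k z) (\<lambda>z. f z - g z) F"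
proof -
  have "uniform_limit X (\<lambda>k z. s k z + (-1) *\<^sub>R t k z) (\<lambda>z. f z + (-1) *\<^sub>R g z) F"
    by (intro uniform_limit_add bounded_linear_uniform_limit_intros assms)
  then show ?thesis by simp
qed

definition bb :: "(complex \<Rightarrow> complex) \<Rightarrow> bool" where
  "bb f \<longleftrightarrow> f \<in> borel_measurable borel \<and> (\<exists>B. \<forall>z. cmod (f z) \<le> B)"

lemma bb_add: "bb f \<Longrightarrow> bb g \<Longrightarrow> bb (\<lambda>z. f z + g z)"
proof -
  assume f: "bb f" and g: "bb g"
  then obtain B1 B2 where B: "\<forall>z. cmod (f z) \<le> B1" "\<forall>z. cmod (g z) \<le> B2" unfolding bb_def by blast
  have "\<forall>z. cmod (f z + g z) \<le> B1 + B2" using B by (metis add_mono norm_triangle_ineq order_trans)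
  then show ?thesis using f g unfolding bb_def by auto
qed
lemma bb_diff: "bb f \<Longrightarrow> bb g \<Longrightarrow> bb (\<lambda>z. f z - g z)"
proof -
  assume f: "bb f" and g: "bb g"
  then obtain B1 B2 where B: "\<forall>z. cmod (f z) \<le> B1" "\<forall>z. cmod (g z) \<le> B2" unfolding bb_def by blast
  have "\<forall>z. cmod (f z - g z) \<le> B1 + B2" using B by (metis add_mono norm_triangle_ineq4 order_trans)
  then show ?thesis using f g unfolding bb_def by auto
qed
lemma bb_mult: "bb f \<Longrightarrow> bb g \<Longrightarrow> bb (\<lambda>z. f z * g z)"
proof -
  assume f: "bb f" and g: "bb g"
  then obtain B1 B2 where B: "\<forall>z. cmod (f z) \<le> B1" "\<forall>z. cmod (g z) \<le> B2" unfolding bb_def by blast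
  have "cmod (f z * g z) \<le> B1 * B2" for z
  proof -
    have "0 \<le> B1" using B(1) norm_ge_zero order_trans by blast
    then show ?thesis using B by (simp add: norm_mult mult_mono)
  qed
  then show ?thesis using f g unfolding bb_def by auto
qed
lemma bb_scale: "bb f \<Longrightarrow> bb (\<lambda>z. c * f z)"
proof -
  assume f: "bb f"
  then obtain B1 where B: "\<forall>z. cmod (f z) \<le> B1" unfolding bb_def by blast
  have "cmod (c * f z) \<le> cmod c * B1" for z using B by (simp add: norm_mult mult_left_mono)
  then show ?thesis using f unfolding bb_def by auto
qed

lemma floor_approx: "\<bar>real_of_int \<lfloor>real (Suc k) * r\<rfloor> / real (Suc k) - r\<bar> < 1 / real (Suc k)"
proof -
  define n where "n = real (Suc k)"
  have n: "n > 0" by (simp add: n_def)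
  have a: "real_of_int \<lfloor>n * r\<rfloor> \<le> n * r" "n * r < real_of_int \<lfloor>n * r\<rfloor> + 1" by linarith+
  have "real_of_int \<lfloor>n * r\<rfloor> / n - r = (real_of_int \<lfloor>n * r\<rfloor> - n * r) / n" using n by (simp add: field_simps)
  then have "\<bar>real_of_int \<lfloor>n * r\<rfloor> / n - r\<bar> = \<bar>real_of_int \<lfloor>n * r\<rfloor> - n * r\<bar> / n" using n by simp
  also have "\<dots> < 1 / n"
  proof -
    have "\<bar>real_of_int \<lfloor>n * r\<rfloor> - n * r\<bar> < 1" using a by linarith
    then show ?thesis using divide_strict_right_mono n by blast
  qed
  finally show ?thesis by (simp add: n_def)
qed

lemma approx_exists:
  assumes f: "f \<in> borel_measurable borel" and B: "\<And>z. cmod (f z) \<le> B"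
  shows "\<exists>s. (\<forall>k. simple_borel (s k)) \<and> uniform_limit UNIV s f sequentially"
proof -
  define q where "q k r = real_of_int \<lfloor>real (Suc k) * r\<rfloor> / real (Suc k)" for k :: nat and r :: real
  define s where "s k z = complex_of_real (q k (Re (f z))) + \<i> * complex_of_real (q k (Im (f z)))" for k z
  have "simple_borel (s k)" for k
  proof -
    have meas: "s k \<in> borel_measurable borel" unfolding s_def q_def by (measurable; use f in simp)
    define N where "N = \<lceil>real (Suc k) * B\<rceil> + 1"
    have fl: "\<lfloor>real (Suc k) * r\<rfloor> \<in> {-N..N}" if "\<bar>r\<bar> \<le> B" for r
    proof -
      define x where "x = real (Suc k) * r"
      define y where "y = real (Suc k) * B"
      have "\<bar>x\<bar> \<le> y" using that by (simp add: abs_mult x_def y_def)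
      moreover have "real_of_int \<lfloor>x\<rfloor> \<le> x" "x < real_of_int \<lfloor>x\<rfloor> + 1" "y \<le> real_of_int \<lceil>y\<rceil>" by linarith+
      ultimately have "real_of_int \<lfloor>x\<rfloor> \<le> real_of_int (\<lceil>y\<rceil> + 1)" "real_of_int (- (\<lceil>y\<rceil> + 1)) \<le> real_of_int \<lfloor>x\<rfloor>"
        by (simp_all add: abs_le_iff) linarith+
      then have "\<lfloor>x\<rfloor> \<le> \<lceil>y\<rceil> + 1" "- (\<lceil>y\<rceil> + 1) \<le> \<lfloor>x\<rfloor>" by (simp_all only: of_int_le_iff)
      then show ?thesis unfolding N_def x_def y_def by simp
    qed
    have "range (s k) \<subseteq> (\<lambda>(a, b). complex_of_real (real_of_int a / real (Suc k)) + \<i> * complex_of_real (real_of_int b / real (Suc k))) ` ({-N..N} \<times> {-N..N})"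
    proof
      fix w assume "w \<in> range (s k)"
      then obtain z where z: "w = s k z" by blast
      have "\<bar>Re (f z)\<bar> \<le> B" "\<bar>Im (f z)\<bar> \<le> B" using B[of z] abs_Re_le_cmod abs_Im_le_cmod order_trans by blast+
      then show "w \<in> (\<lambda>(a, b). complex_of_real (real_of_int a / real (Suc k)) + \<i> * complex_of_real (real_of_int b / real (Suc k))) ` ({-N..N} \<times> {-N..N})"
        unfolding z s_def q_def using fl by (intro image_eqI[of _ _ "(\<lfloor>real (Suc k) * Re (f z)\<rfloor>, \<lfloor>real (Suc k) * Im (f z)\<rfloor>)"]) auto
    qed
    then have "finite (range (s k))" by (rule finite_subset) auto
    then show ?thesis using meas by (simp add: simple_borel_iff simple_function_borel_measurable)
  qed
  moreover have "uniform_limit UNIV s f sequentially"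
  proof (rule uniform_limitI)
    fix e :: real assume e: "e > 0"
    obtain N :: nat where N: "2 / e < real N" using reals_Archimedean2 by blast
    have "\<forall>z. dist (s k z) (f z) < e" if k: "k \<ge> N" for k
    proof
      fix z
      have "dist (s k z) (f z) \<le> \<bar>Re (s k z - f z)\<bar> + \<bar>Im (s k z - f z)\<bar>"
        unfolding dist_norm by (rule cmod_le)
      also have "\<dots> = \<bar>q k (Re (f z)) - Re (f z)\<bar> + \<bar>q k (Im (f z)) - Im (f z)\<bar>"
        by (simp add: s_def)
      also have "\<dots> < 1 / real (Suc k) + 1 / real (Suc k)"
        unfolding q_def by (intro add_strict_mono floor_approx)
      also have "\<dots> \<le> e"
      proof -
        have "2 / e < real (Suc k)" using N k by simp
        then show ?thesis using e by (simp add: field_simps)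
      qed
      finally show "dist (s k z) (f z) < e" .
    qed
    then show "\<forall>\<^sub>F k in sequentially. \<forall>z\<in>UNIV. dist (s k z) (f z) < e"
      unfolding eventually_sequentially by blast
  qed
  ultimately show ?thesis by blast
qed

context spec
begin

lemma approx_close:
  assumes s: "\<forall>k. simple_borel (s k)" "uniform_limit UNIV s f sequentially"
    and t: "\<forall>k. simple_borel (t k)" "uniform_limit UNIV t f sequentially"
  shows "(\<lambda>k. simple_integral E (t k) - simple_integral E (s k)) \<longlonglongrightarrow> 0"
  unfolding tendsto_iff
proof (intro allI impI)
  fix r :: real assume r: "r > 0"
  define e where "e = r / (16 * EM)"
  have e: "e > 0" using r EM(1) by (simp add: e_def)
  have "\<forall>\<^sub>F k in sequentially. (\<forall>z\<in>UNIV. dist (s k z) (f z) < e) \<and> (\<forall>z\<in>UNIV. dist (t k z) (f z) < e)"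
    using uniform_limitD[OF s(2) e] uniform_limitD[OF t(2) e] by (rule eventually_conj)
  then show "\<forall>\<^sub>F k in sequentially. dist (simple_integral E (t k) - simple_integral E (s k)) 0 < r"
  proof (rule eventually_mono)
    fix k assume h: "(\<forall>z\<in>UNIV. dist (s k z) (f z) < e) \<and> (\<forall>z\<in>UNIV. dist (t k z) (f z) < e)"
    have "cmod (t k z - s k z) \<le> 2 * e" for z
    proof -
      have "cmod (t k z - s k z) \<le> dist (t k z) (f z) + dist (s k z) (f z)"
        by (metis dist_norm dist_commute dist_triangle)
      moreover have "dist (t k z) (f z) < e" "dist (s k z) (f z) < e" using h by auto
      ultimately show ?thesis by linarith
    qed
    then have "norm (simple_integral E (\<lambda>z. t k z - s k z)) \<le> 4 * EM * (2 * e)"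
      by (intro SI_bound simple_borel_diff) (use s t in auto)
    also have "\<dots> < r" using r EM(1) by (simp add: e_def field_simps)
    finally show "dist (simple_integral E (t k) - simple_integral E (s k)) 0 < r"
      using SI_diff s t by (simp add: dist_norm)
  qed
qed

lemma approx_convergent:
  assumes s: "\<forall>k. simple_borel (s k)" "uniform_limit UNIV s f sequentially"
  shows "convergent (\<lambda>k. simple_integral E (s k))"
proof -
  have "Cauchy (\<lambda>k. simple_integral E (s k))"
  proof (rule CauchyI)
    fix r :: real assume r: "r > 0"
    define e where "e = r / (16 * EM)"
    have e: "e > 0" using r EM(1) by (simp add: e_def)
    obtain N where N: "\<And>k. k \<ge> N \<Longrightarrow> \<forall>z\<in>UNIV. dist (s k z) (f z) < e"
      using uniform_limitD[OF s(2) e] unfolding eventually_sequentially by blast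
    have "norm (simple_integral E (s m) - simple_integral E (s n)) < r" if "m \<ge> N" "n \<ge> N" for m n
    proof -
      have "cmod (s m z - s n z) \<le> 2 * e" for z
      proof -
        have "cmod (s m z - s n z) \<le> dist (s m z) (f z) + dist (s n z) (f z)"
          by (metis dist_norm dist_commute dist_triangle)
        moreover have "dist (s m z) (f z) < e" "dist (s n z) (f z) < e" using N that by auto
        ultimately show ?thesis by linarith
      qed
      then have "norm (simple_integral E (\<lambda>z. s m z - s n z)) \<le> 4 * EM * (2 * e)"
        by (intro SI_bound simple_borel_diff) (use s in auto)
      also have "\<dots> < r" using r EM(1) by (simp add: e_def field_simps)
      finally show ?thesis using SI_diff s by simp
    qed
    then show "\<exists>M. \<forall>m\<ge>M. \<forall>n\<ge>M. norm (simple_integral E (s m) - simple_integral E (s n)) < r" by blast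
  qed
  then show ?thesis by (simp add: Cauchy_convergent_iff)
qed

lemma spectral_integral_lim:
  assumes s: "\<forall>k. simple_borel (s k)" "uniform_limit UNIV s f sequentially"
  shows "(\<lambda>k. simple_integral E (s k)) \<longlonglongrightarrow> spectral_integral E f"
proof -
  obtain L where L: "(\<lambda>k. simple_integral E (s k)) \<longlonglongrightarrow> L"
    using approx_convergent[OF s] by (auto simp: convergent_def)
  have P: "\<forall>t. (\<forall>k. simple_borel (t k)) \<longrightarrow> uniform_limit UNIV t f sequentially \<longrightarrow>
       (\<lambda>k. simple_integral E (t k)) \<longlonglongrightarrow> L"
  proof (intro allI impI)
    fix t assume t: "\<forall>k. simple_borel (t k)" "uniform_limit UNIV t f sequentially"
    have "(\<lambda>k. simple_integral E (s k) + (simple_integral E (t k) - simple_integral E (s k))) \<longlonglongrightarrow> L + 0"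
      by (intro tendsto_add L approx_close[OF s t])
    then show "(\<lambda>k. simple_integral E (t k)) \<longlonglongrightarrow> L" by simp
  qed
  have "spectral_integral E f = L"
    unfolding spectral_integral_def
  proof (rule the_equality)
    show "\<forall>t. (\<forall>k. simple_borel (t k)) \<longrightarrow> uniform_limit UNIV t f sequentially \<longrightarrow>
       (\<lambda>k. simple_integral E (t k)) \<longlonglongrightarrow> L" by (rule P)
    fix S assume "\<forall>t. (\<forall>k. simple_borel (t k)) \<longrightarrow> uniform_limit UNIV t f sequentially \<longrightarrow>
       (\<lambda>k. simple_integral E (t k)) \<longlonglongrightarrow> S"
    then have "(\<lambda>k. simple_integral E (s k)) \<longlonglongrightarrow> S" using s by blast
    then show "S = L" using L LIMSEQ_unique by blast
  qed
  then show ?thesis using L by simp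
qed

lemma bb_approx:
  assumes "bb f"
  obtains s where "\<forall>k. simple_borel (s k)" "uniform_limit UNIV s f sequentially"
  using approx_exists assms unfolding bb_def by blast

lemma I_add:
  assumes f: "bb f" and g: "bb g"
  shows "spectral_integral E (\<lambda>z. f z + g z) = spectral_integral E f + spectral_integral E g"
proof -
  obtain s where s: "\<forall>k. simple_borel (s k)" "uniform_limit UNIV s f sequentially" using bb_approx[OF f] by blast
  obtain t where t: "\<forall>k. simple_borel (t k)" "uniform_limit UNIV t g sequentially" using bb_approx[OF g] by blast
  have st: "\<forall>k. simple_borel (\<lambda>z. s k z + t k z)" "uniform_limit UNIV (\<lambda>k z. s k z + t k z) (\<lambda>z. f z + g z) sequentially"
    using s t by (auto intro: simple_borel_add uniform_limit_add)
  have "(\<lambda>k. simple_integral E (s k) + simple_integral E (t k)) \<longlonglongrightarrow> spectral_integral E f + spectral_integral E g"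
    by (intro tendsto_add spectral_integral_lim s t)
  moreover have "(\<lambda>k. simple_integral E (s k) + simple_integral E (t k)) \<longlonglongrightarrow> spectral_integral E (\<lambda>z. f z + g z)"
    using spectral_integral_lim[OF st] s t by (simp add: SI_add)
  ultimately show ?thesis using LIMSEQ_unique by metis
qed

lemma I_diff:
  assumes f: "bb f" and g: "bb g"
  shows "spectral_integral E (\<lambda>z. f z - g z) = spectral_integral E f - spectral_integral E g"
proof -
  obtain s where s: "\<forall>k. simple_borel (s k)" "uniform_limit UNIV s f sequentially" using bb_approx[OF f] by blast
  obtain t where t: "\<forall>k. simple_borel (t k)" "uniform_limit UNIV t g sequentially" using bb_approx[OF g] by blast
  have st: "\<forall>k. simple_borel (\<lambda>z. s k z - t k z)" "uniform_limit UNIV (\<lambda>k z. s k z - t k z) (\<lambda>z. f z - g z) sequentially"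
    using s t by (auto intro: simple_borel_diff uniform_limit_diff')
  have "(\<lambda>k. simple_integral E (s k) - simple_integral E (t k)) \<longlonglongrightarrow> spectral_integral E f - spectral_integral E g"
    by (intro tendsto_diff spectral_integral_lim s t)
  moreover have "(\<lambda>k. simple_integral E (s k) - simple_integral E (t k)) \<longlonglongrightarrow> spectral_integral E (\<lambda>z. f z - g z)"
    using spectral_integral_lim[OF st] s t by (simp add: SI_diff)
  ultimately show ?thesis using LIMSEQ_unique by metis
qed

lemma I_scale:
  assumes f: "bb f"
  shows "spectral_integral E (\<lambda>z. complex_of_real r * f z) = r *\<^sub>R spectral_integral E f"
proof -
  obtain s where s: "\<forall>k. simple_borel (s k)" "uniform_limit UNIV s f sequentially" using bb_approx[OF f] by blast
  have st: "\<forall>k. simple_borel (\<lambda>z. complex_of_real r * s k z)" "uniform_limit UNIV (\<lambda>k z. complex_of_real r * s k z) (\<lambda>z. complex_of_real r * f z) sequentially"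
    using s by (auto intro: simple_borel_scale bounded_linear_uniform_limit_intros)
  have "(\<lambda>k. r *\<^sub>R simple_integral E (s k)) \<longlonglongrightarrow> r *\<^sub>R spectral_integral E f"
    by (intro tendsto_scaleR tendsto_const spectral_integral_lim s)
  moreover have "(\<lambda>k. r *\<^sub>R simple_integral E (s k)) \<longlonglongrightarrow> spectral_integral E (\<lambda>z. complex_of_real r * f z)"
    using spectral_integral_lim[OF st] s by (simp add: SI_scale)
  ultimately show ?thesis using LIMSEQ_unique by metis
qed

lemma I_mult:
  assumes f: "bb f" and g: "bb g"
  shows "spectral_integral E (\<lambda>z. f z * g z) = spectral_integral E f o\<^sub>L spectral_integral E g"
proof -
  obtain s where s: "\<forall>k. simple_borel (s k)" "uniform_limit UNIV s f sequentially" using bb_approx[OF f] by blast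
  obtain t where t: "\<forall>k. simple_borel (t k)" "uniform_limit UNIV t g sequentially" using bb_approx[OF g] by blast
  have bf: "bounded (range f)" and bg: "bounded (range g)"
    using f g unfolding bb_def bounded_iff by auto
  have st: "\<forall>k. simple_borel (\<lambda>z. s k z * t k z)" "uniform_limit UNIV (\<lambda>k z. s k z * t k z) (\<lambda>z. f z * g z) sequentially"
    using s t bf bg by (auto intro: simple_borel_mult bounded_bilinear_bounded_uniform_limit_intros)
  have "(\<lambda>k. simple_integral E (s k) o\<^sub>L simple_integral E (t k)) \<longlonglongrightarrow> (spectral_integral E f o\<^sub>L spectral_integral E g)"
    by (intro bounded_bilinear.tendsto[OF bounded_bilinear_blinfun_compose] spectral_integral_lim s t)
  moreover have "(\<lambda>k. simple_integral E (s k) o\<^sub>L simple_integral E (t k)) \<longlonglongrightarrow> spectral_integral E (\<lambda>z. f z * g z)"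
    using spectral_integral_lim[OF st] s t by (simp add: SI_mult)
  ultimately show ?thesis using LIMSEQ_unique by metis
qed

lemma I_bound:
  assumes f: "bb f" and B: "\<And>z. cmod (f z) \<le> B"
  shows "norm (spectral_integral E f) \<le> 4 * EM * B"
proof (rule field_le_epsilon)
  fix e :: real assume e: "e > 0"
  obtain s where s: "\<forall>k. simple_borel (s k)" "uniform_limit UNIV s f sequentially" using bb_approx[OF f] by blast
  have "(\<lambda>k. norm (simple_integral E (s k))) \<longlonglongrightarrow> norm (spectral_integral E f)"
    by (intro tendsto_norm spectral_integral_lim s)
  moreover have "\<forall>\<^sub>F k in sequentially. norm (simple_integral E (s k)) \<le> 4 * EM * (B + e / (4 * EM))"
  proof -
    have ev: "\<forall>\<^sub>F k in sequentially. \<forall>z\<in>UNIV. dist (s k z) (f z) < e / (4 * EM)"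
      using uniform_limitD[OF s(2), of "e / (4 * EM)"] e EM(1) by simp
    show ?thesis
    proof (rule eventually_mono[OF ev])
      fix k assume h: "\<forall>z\<in>UNIV. dist (s k z) (f z) < e / (4 * EM)"
      have "cmod (s k z) \<le> B + e / (4 * EM)" for z
      proof -
        have "cmod (s k z) \<le> cmod (f z) + dist (s k z) (f z)"
          by (metis dist_norm norm_triangle_sub add.commute)
        moreover have "dist (s k z) (f z) < e / (4 * EM)" using h by auto
        ultimately show ?thesis using B[of z] by linarith
      qed
      then show "norm (simple_integral E (s k)) \<le> 4 * EM * (B + e / (4 * EM))"
        using s by (intro SI_bound) auto
    qed
  qed
  ultimately have "norm (spectral_integral E f) \<le> 4 * EM * (B + e / (4 * EM))"
    by (intro tendsto_upperbound) auto
  moreover have "4 * EM * (B + e / (4 * EM)) = 4 * EM * B + e" using EM(1) by (simp add: field_simps)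
  ultimately show "norm (spectral_integral E f) \<le> 4 * EM * B + e" by linarith
qed

end

lemma neumann:
  fixes X :: "'a::banach \<Rightarrow>\<^sub>L 'a"
  assumes X: "norm X < 1"
  shows "\<exists>S. S o\<^sub>L (id_blinfun - X) = id_blinfun \<and> (id_blinfun - X) o\<^sub>L S = id_blinfun"
proof -
  define P where "P n = ((\<lambda>Y. X o\<^sub>L Y) ^^ n) id_blinfun" for n
  have P0: "P 0 = id_blinfun" by (simp add: P_def)
  have PS: "P (Suc n) = X o\<^sub>L P n" for n by (simp add: P_def)
  have PS': "P (Suc n) = P n o\<^sub>L X" for n
  proof (induction n)
    case 0 then show ?case by (simp add: PS P0) (rule blinfun_eqI, simp)
  next
    case (Suc n)
    have "P (Suc (Suc n)) = X o\<^sub>L (P n o\<^sub>L X)" using Suc by (simp add: PS)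
    also have "\<dots> = (X o\<^sub>L P n) o\<^sub>L X" by (rule blinfun_eqI) simp
    finally show ?case by (simp add: PS)
  qed
  have Pn: "norm (P n) \<le> norm X ^ n" for n
  proof (induction n)
    case 0 then show ?case by (simp add: P0 norm_blinfun_id_le)
  next
    case (Suc n)
    have "norm (P (Suc n)) \<le> norm X * norm (P n)" unfolding PS by (rule norm_blinfun_compose)
    also have "\<dots> \<le> norm X * norm X ^ n" using Suc by (intro mult_left_mono) auto
    finally show ?case by simp
  qed
  have geo: "(\<lambda>n. norm X ^ n) \<longlonglongrightarrow> 0" using X by (intro LIMSEQ_power_zero) auto
  have P0lim: "P \<longlonglongrightarrow> 0"
    by (rule tendsto_norm_zero_cancel, rule Lim_null_comparison[OF _ geo]) (use Pn in auto)
  have sm: "summable P"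
    by (rule summable_comparison_test[of _ "\<lambda>n. norm X ^ n"]) (use Pn X in \<open>auto intro!: summable_geometric\<close>)
  define S where "S = suminf P"
  have tel: "(\<lambda>n. P n - P (Suc n)) sums id_blinfun"
    using telescope_sums'[OF P0lim] by (simp add: P0)
  have "(\<lambda>n. (id_blinfun - X) o\<^sub>L P n) sums ((id_blinfun - X) o\<^sub>L S)"
    unfolding S_def
    by (rule bounded_linear.sums[OF bounded_bilinear.bounded_linear_right[OF bounded_bilinear_blinfun_compose]])
       (use sm in \<open>simp add: summable_sums\<close>)
  moreover have "(id_blinfun - X) o\<^sub>L P n = P n - P (Suc n)" for n
    by (rule blinfun_eqI) (simp add: PS blinfun.diff_left blinfun.diff_right)
  ultimately have 1: "(id_blinfun - X) o\<^sub>L S = id_blinfun" using tel sums_unique2 by auto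
  have "(\<lambda>n. P n o\<^sub>L (id_blinfun - X)) sums (S o\<^sub>L (id_blinfun - X))"
    unfolding S_def
    by (rule bounded_linear.sums[OF bounded_bilinear.bounded_linear_left[OF bounded_bilinear_blinfun_compose]])
       (use sm in \<open>simp add: summable_sums\<close>)
  moreover have "P n o\<^sub>L (id_blinfun - X) = P n - P (Suc n)" for n
    by (rule blinfun_eqI) (simp add: PS' blinfun.diff_left blinfun.diff_right)
  ultimately have 2: "S o\<^sub>L (id_blinfun - X) = id_blinfun" using tel sums_unique2 by auto
  from 1 2 show ?thesis by blast
qed

lemma norm_cscale_op: "norm (cscale_op c L) \<le> cmod c * norm L"
proof (rule norm_blinfun_bound)
  show "0 \<le> cmod c * norm L" by simp
  fix x
  have "norm (blinfun_apply (cscale_op c L) x) = cmod c * norm (blinfun_apply L x)"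
    by (simp add: cscale_op_apply norm_scaleC)
  also have "\<dots> \<le> cmod c * (norm L * norm x)" by (intro mult_left_mono norm_blinfun) auto
  finally show "norm (blinfun_apply (cscale_op c L) x) \<le> cmod c * norm L * norm x" by (simp add: mult_ac)
qed

lemma spectrum_bounded:
  fixes T :: "'g::{complex_normed_vector,banach} \<Rightarrow>\<^sub>L 'g"
  assumes w: "cmod w > norm T"
  shows "w \<notin> op_spectrum T"
proof -
  have w0: "w \<noteq> 0" using w norm_ge_zero[of T] by auto
  define X where "X = cscale_op (1 / w) T"
  have "norm X \<le> cmod (1 / w) * norm T" unfolding X_def by (rule norm_cscale_op)
  also have "\<dots> < 1" using w w0 by (simp add: norm_divide field_simps)
  finally obtain S where S: "S o\<^sub>L (id_blinfun - X) = id_blinfun" "(id_blinfun - X) o\<^sub>L S = id_blinfun"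
    using neumann by blast
  have S1: "blinfun_apply S (y - (1/w) *\<^sub>C blinfun_apply T y) = y" for y
    using arg_cong[OF S(1), of "\<lambda>L. blinfun_apply L y"] by (simp add: X_def cscale_op_apply blinfun.diff_right blinfun.diff_left blinfun.diff_right)
  have S2: "blinfun_apply S y - (1/w) *\<^sub>C blinfun_apply T (blinfun_apply S y) = y" for y
    using arg_cong[OF S(2), of "\<lambda>L. blinfun_apply L y"] by (simp add: X_def cscale_op_apply blinfun.diff_left blinfun.diff_right)
  define R where "R = S o\<^sub>L cscale_op (1/w) id_blinfun"
  have "R o\<^sub>L shift_op w T = id_blinfun"
  proof (rule blinfun_eqI)
    fix x
    have "(1/w) *\<^sub>C (w *\<^sub>C x - blinfun_apply T x) = x - (1/w) *\<^sub>C blinfun_apply T x"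
      using w0 by (simp add: scaleC_diff_right scaleC_scaleC scaleC_one)
    then show "blinfun_apply (R o\<^sub>L shift_op w T) x = blinfun_apply id_blinfun x"
      by (simp add: R_def cscale_op_apply shift_op_apply S1)
  qed
  moreover have "shift_op w T o\<^sub>L R = id_blinfun"
  proof (rule blinfun_eqI)
    fix x :: 'g
    define y where "y = (1/w) *\<^sub>C x"
    have "w *\<^sub>C blinfun_apply S y - blinfun_apply T (blinfun_apply S y)
        = w *\<^sub>C (blinfun_apply S y - (1/w) *\<^sub>C blinfun_apply T (blinfun_apply S y))"
      using w0 by (simp add: scaleC_diff_right scaleC_scaleC scaleC_one)
    also have "\<dots> = x" using w0 by (simp add: S2 y_def scaleC_scaleC scaleC_one)
    finally show "blinfun_apply (shift_op w T o\<^sub>L R) x = blinfun_apply id_blinfun x"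
      by (simp add: R_def cscale_op_apply shift_op_apply y_def)
  qed
  ultimately show ?thesis unfolding op_spectrum_def by blast
qed

lemma spectrum_open_compl:
  fixes T :: "'g::{complex_normed_vector,banach} \<Rightarrow>\<^sub>L 'g"
  assumes w: "w \<notin> op_spectrum T"
  shows "\<exists>r>0. ball w r \<subseteq> - op_spectrum T"
proof -
  obtain R where R: "R o\<^sub>L shift_op w T = id_blinfun" "shift_op w T o\<^sub>L R = id_blinfun"
    using w unfolding op_spectrum_def by blast
  have R1: "blinfun_apply R (w *\<^sub>C x - blinfun_apply T x) = x" for x
    using arg_cong[OF R(1), of "\<lambda>L. blinfun_apply L x"] by (simp add: shift_op_apply)
  have R2: "w *\<^sub>C blinfun_apply R x - blinfun_apply T (blinfun_apply R x) = x" for x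
    using arg_cong[OF R(2), of "\<lambda>L. blinfun_apply L x"] by (simp add: shift_op_apply)
  define r where "r = 1 / (norm R + 1)"
  have Rpos: "norm R + 1 > 0" by (metis norm_ge_zero add_nonneg_pos zero_less_one)
  then have r: "r > 0" by (simp add: r_def)
  have "w' \<notin> op_spectrum T" if w': "dist w' w < r" for w'
  proof -
    define d where "d = w' - w"
    have d: "cmod d * norm R < 1"
    proof -
      have "cmod d < r" using w' by (simp add: d_def dist_norm)
      then have "cmod d * norm R \<le> r * norm R" by (intro mult_right_mono) auto
      also have "\<dots> < 1" using Rpos by (simp add: r_def divide_less_eq)
      finally show ?thesis .
    qed
    define Y where "Y = - (R o\<^sub>L cscale_op d id_blinfun)"
    have "norm Y \<le> norm R * norm (cscale_op d (id_blinfun :: 'g \<Rightarrow>\<^sub>L 'g))" unfolding Y_def norm_minus_cancel using norm_blinfun_compose[of R "cscale_op d id_blinfun"] by simp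
    also have "\<dots> \<le> norm R * (cmod d * 1)"
      by (intro mult_left_mono order.trans[OF norm_cscale_op] ) (auto intro: mult_left_mono norm_blinfun_id_le)
    also have "\<dots> < 1" using d by (simp add: mult_ac)
    finally obtain S where S: "S o\<^sub>L (id_blinfun - Y) = id_blinfun" "(id_blinfun - Y) o\<^sub>L S = id_blinfun"
      using neumann by blast
    have S1: "blinfun_apply S (y + blinfun_apply R (d *\<^sub>C y)) = y" for y
      using arg_cong[OF S(1), of "\<lambda>L. blinfun_apply L y"] by (simp add: Y_def cscale_op_apply blinfun.add_left blinfun.add_right)
    have S2: "blinfun_apply S y + blinfun_apply R (d *\<^sub>C blinfun_apply S y) = y" for y
      using arg_cong[OF S(2), of "\<lambda>L. blinfun_apply L y"] by (simp add: Y_def cscale_op_apply blinfun.add_left blinfun.add_right)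
    have key: "blinfun_apply (shift_op w' T) y = blinfun_apply (shift_op w T) (y + blinfun_apply R (d *\<^sub>C y))" for y
    proof -
      have "blinfun_apply (shift_op w T) (blinfun_apply R (d *\<^sub>C y)) = d *\<^sub>C y"
        using R2 by (simp add: shift_op_apply)
      then have "blinfun_apply (shift_op w T) (y + blinfun_apply R (d *\<^sub>C y)) = blinfun_apply (shift_op w T) y + d *\<^sub>C y"
        by (simp add: blinfun.add_right)
      also have "\<dots> = blinfun_apply (shift_op w' T) y"
        by (simp add: shift_op_apply d_def scaleC_diff_left algebra_simps)
      finally show ?thesis by simp
    qed
    define Q where "Q = S o\<^sub>L R"
    have "Q o\<^sub>L shift_op w' T = id_blinfun"
      by (rule blinfun_eqI) (simp add: Q_def key R1[folded shift_op_apply] S1)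
    moreover have "shift_op w' T o\<^sub>L Q = id_blinfun"
    proof (rule blinfun_eqI)
      fix x
      have "blinfun_apply (shift_op w' T) (blinfun_apply S (blinfun_apply R x))
          = blinfun_apply (shift_op w T) (blinfun_apply R x)"
        by (simp only: key S2)
      also have "\<dots> = x" using R2 by (simp add: shift_op_apply)
      finally show "blinfun_apply (shift_op w' T o\<^sub>L Q) x = blinfun_apply id_blinfun x" by (simp add: Q_def)
    qed
    ultimately show ?thesis unfolding op_spectrum_def by blast
  qed
  then show ?thesis using r by (auto simp: dist_commute)
qed

lemma spectrum_compact:
  fixes T :: "'g::{complex_normed_vector,banach} \<Rightarrow>\<^sub>L 'g"
  shows "compact (op_spectrum T)"
unfolding compact_eq_bounded_closed proof
  show "bounded (op_spectrum T)"
    unfolding bounded_iff using spectrum_bounded not_le by blast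
  show "closed (op_spectrum T)"
    unfolding closed_def open_contains_ball using spectrum_open_compl by blast
qed

lemma unif_deriv:
  fixes F :: "complex \<Rightarrow> complex" and \<epsilon> :: real
  assumes K: "compact K" and V: "open V" and F: "F holomorphic_on V"
    and tK: "\<forall>z\<in>K. complex_of_real t * z \<in> V" and e: "\<epsilon> > 0"
  shows "\<exists>\<delta>>0. \<forall>h::real. \<bar>h\<bar> < \<delta> \<longrightarrow> (\<forall>z\<in>K.
     cmod (F (complex_of_real (t + h) * z) - F (complex_of_real t * z) - complex_of_real h * z * deriv F (complex_of_real t * z)) \<le> \<epsilon> * \<bar>h\<bar>)"
proof -
  define L where "L = (\<lambda>z. complex_of_real t * z) ` K"
  have cL: "compact L" unfolding L_def
    by (intro compact_continuous_image K continuous_intros)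
  have LV: "L \<subseteq> V" using tK by (auto simp: L_def)
  obtain d where d: "d > 0" "\<And>x y. x \<in> L \<Longrightarrow> y \<in> - V \<Longrightarrow> d \<le> dist x y"
    using separate_compact_closed[of L "-V"] cL V LV by force
  define \<rho> where "\<rho> = d / 2"
  have \<rho>: "\<rho> > 0" using d by (simp add: \<rho>_def)
  define L' where "L' = {x + y | x y. x \<in> L \<and> y \<in> cball 0 \<rho>}"
  have cL': "compact L'" unfolding L'_def by (intro compact_sums cL compact_cball)
  have L'V: "L' \<subseteq> V"
  proof
    fix v assume "v \<in> L'"
    then obtain x y where xy: "v = x + y" "x \<in> L" "norm y \<le> \<rho>" by (auto simp: L'_def)
    show "v \<in> V"
    proof (rule ccontr)
      assume "v \<notin> V"
      then have "d \<le> dist x v" using d(2)[OF xy(2)] by auto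
      also have "dist x v = norm y" by (simp add: xy(1) dist_norm)
      finally show False using xy(3) d by (simp add: \<rho>_def)
    qed
  qed
  have cF': "continuous_on L' (deriv F)"
    using holomorphic_on_imp_continuous_on[OF holomorphic_deriv[OF F V]] L'V continuous_on_subset by blast
  then have uc: "uniformly_continuous_on L' (deriv F)" using cL' compact_uniformly_continuous by blast
  obtain R where R: "R > 0" "\<And>z. z \<in> K \<Longrightarrow> cmod z \<le> R"
    using compact_imp_bounded[OF K] unfolding bounded_pos by blast
  define \<epsilon>' where "\<epsilon>' = \<epsilon> / R"
  have e': "\<epsilon>' > 0" using e R by (simp add: \<epsilon>'_def)
  obtain \<eta> where \<eta>: "\<eta> > 0" "\<And>a b. a \<in> L' \<Longrightarrow> b \<in> L' \<Longrightarrow> dist b a < \<eta> \<Longrightarrow> dist (deriv F b) (deriv F a) < \<epsilon>'"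
    using uc e' unfolding uniformly_continuous_on_def by metis
  define r0 where "r0 = min \<rho> \<eta>"
  have r0: "r0 > 0" using \<rho> \<eta> by (simp add: r0_def)
  define \<delta> where "\<delta> = r0 / R"
  have \<delta>: "\<delta> > 0" using r0 R by (simp add: \<delta>_def)
  have main: "cmod (F (complex_of_real (t + h) * z) - F (complex_of_real t * z) - complex_of_real h * z * deriv F (complex_of_real t * z)) \<le> \<epsilon> * \<bar>h\<bar>"
    if h: "\<bar>h\<bar> < \<delta>" and z: "z \<in> K" for h z
  proof -
    define w where "w = complex_of_real t * z"
    define u where "u = complex_of_real h * z"
    have wL: "w \<in> L" using z unfolding w_def L_def by (rule imageI)
    have nu: "cmod u \<le> \<bar>h\<bar> * R" using R(2)[OF z] by (simp add: u_def norm_mult mult_left_mono)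
    have "\<bar>h\<bar> * R < r0" using h R by (simp add: \<delta>_def field_simps)
    then have ur: "cmod u < r0" using nu by linarith
    define S where "S = ball w r0"
    have SL': "S \<subseteq> L'"
    proof
      fix v assume "v \<in> S"
      then have "norm (v - w) \<le> \<rho>" by (simp add: S_def dist_norm r0_def norm_minus_commute)
      then show "v \<in> L'" unfolding L'_def using wL by (intro CollectI exI[of _ w] exI[of _ "v - w"]) auto
    qed
    have wL': "w \<in> L'" using SL' r0 by (simp add: S_def subset_iff)
    define G where "G v = F v - v * deriv F w" for v
    have Gd: "(G has_field_derivative (deriv F v - deriv F w)) (at v within S)" if "v \<in> S" for v
    proof -
      have "v \<in> V" using that SL' L'V by blast
      then have "(F has_field_derivative deriv F v) (at v within S)" by (rule holomorphic_derivI[OF F V])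
      then show ?thesis unfolding G_def by (auto intro!: derivative_eq_intros)
    qed
    have Gb: "norm (deriv F v - deriv F w) \<le> \<epsilon>'" if "v \<in> S" for v
    proof -
      have "dist v w < \<eta>" using that by (simp add: S_def r0_def dist_commute)
      then have "dist (deriv F v) (deriv F w) < \<epsilon>'" using \<eta>(2)[OF wL'] that SL' by blast
      then show ?thesis by (simp add: dist_norm)
    qed
    have "norm (G (w + u) - G w) \<le> \<epsilon>' * norm ((w + u) - w)"
      by (rule field_differentiable_bound[OF convex_ball[of w r0, folded S_def] Gd Gb])
         (use ur r0 in \<open>auto simp: S_def dist_norm\<close>)
    moreover have "G (w + u) - G w = F (complex_of_real (t + h) * z) - F (complex_of_real t * z) - complex_of_real h * z * deriv F (complex_of_real t * z)"
      by (simp add: G_def w_def u_def algebra_simps)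
    moreover have "\<epsilon>' * norm u \<le> \<epsilon> * \<bar>h\<bar>"
    proof -
      have "\<epsilon>' * norm u \<le> \<epsilon>' * (\<bar>h\<bar> * R)" using nu e' by (intro mult_left_mono) auto
      also have "\<dots> = \<epsilon> * \<bar>h\<bar>" using R by (simp add: \<epsilon>'_def)
      finally show ?thesis .
    qed
    ultimately show ?thesis by simp
  qed
  show ?thesis using \<delta> main by blast
qed

definition cutK :: "complex set \<Rightarrow> (complex \<Rightarrow> complex) \<Rightarrow> complex \<Rightarrow> complex" where
  "cutK K f z = (if z \<in> K then f z else 0)"

lemma bb_cut:
  assumes K: "compact K" and f: "continuous_on K f"
  shows "bb (cutK K f)"
proof -
  have m: "cutK K f \<in> borel_measurable borel"
    unfolding cutK_def
    by (rule borel_measurable_continuous_on_if) (use K f borel_closed[OF compact_imp_closed[OF K]] in \<open>auto intro: continuous_on_const\<close>)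
  obtain B where B: "\<forall>z\<in>K. cmod (f z) \<le> B"
    using compact_imp_bounded[OF compact_continuous_image[OF f K]] unfolding bounded_iff by auto
  have "\<forall>z. cmod (cutK K f z) \<le> max B 0" using B by (auto simp: cutK_def intro: max.coboundedI1)
  then show ?thesis using m unfolding bb_def by blast
qed

lemma cont_comp_scale:
  assumes F: "F holomorphic_on V" and sK: "\<forall>z\<in>K. complex_of_real s * z \<in> V"
  shows "continuous_on K (\<lambda>z. F (complex_of_real s * z))"
  by (rule continuous_on_compose2[OF holomorphic_on_imp_continuous_on[OF F]]) (use sK in \<open>auto intro!: continuous_intros\<close>)

locale sto = spec E for E :: "complex set \<Rightarrow> ('g::{complex_normed_vector,banach} \<Rightarrow>\<^sub>L 'g)" +
  fixes T :: "'g \<Rightarrow>\<^sub>L 'g"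
  assumes T_id: "T = fcalc E T (\<lambda>z. z)"
begin

lemma fcalc_cut: "fcalc E T f = spectral_integral E (cutK (op_spectrum T) f)"
  unfolding fcalc_def cutK_def by simp

lemma Phi_deriv:
  assumes V: "open V" and F: "F holomorphic_on V" and d0: "\<delta>0 > 0"
    and sK: "\<forall>s. \<bar>s - t\<bar> < \<delta>0 \<longrightarrow> (\<forall>z\<in>op_spectrum T. complex_of_real s * z \<in> V)"
  shows "((\<lambda>s. fcalc E T (\<lambda>z. F (complex_of_real s * z))) has_vector_derivative
           (T o\<^sub>L fcalc E T (\<lambda>z. deriv F (complex_of_real t * z)))) (at t)"
proof -
  define K where "K = op_spectrum T"
  have K: "compact K" unfolding K_def by (rule spectrum_compact)
  have fcK: "fcalc E T f = spectral_integral E (cutK K f)" for f by (simp add: fcalc_cut K_def)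
  define D where "D = T o\<^sub>L fcalc E T (\<lambda>z. deriv F (complex_of_real t * z))"
  have tK: "\<forall>z\<in>K. complex_of_real t * z \<in> V" using sK d0 by (auto simp: K_def)
  have F': "deriv F holomorphic_on V" using holomorphic_deriv[OF F V] .
  have bbphi: "bb (cutK K (\<lambda>z. F (complex_of_real s * z)))" if "\<forall>z\<in>K. complex_of_real s * z \<in> V" for s
    by (intro bb_cut K cont_comp_scale[OF F] that)
  have bbpsi: "bb (cutK K (\<lambda>z. deriv F (complex_of_real t * z)))"
    by (intro bb_cut K cont_comp_scale[OF F'] tK)
  have bbid: "bb (cutK K (\<lambda>z. z))" by (intro bb_cut K continuous_on_id)
  show ?thesis
    unfolding has_vector_derivative_def has_derivative_at_alt
  proof (intro conjI allI impI bounded_linear_scaleR_left)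
    fix e :: real assume e: "e > 0"
    define \<epsilon> where "\<epsilon> = e / (4 * EM)"
    have \<epsilon>: "\<epsilon> > 0" using e EM(1) by (simp add: \<epsilon>_def)
    obtain \<delta>1 where \<delta>1: "\<delta>1 > 0" and est: "\<And>h. \<bar>h\<bar> < \<delta>1 \<Longrightarrow> \<forall>z\<in>K.
       cmod (F (complex_of_real (t + h) * z) - F (complex_of_real t * z) - complex_of_real h * z * deriv F (complex_of_real t * z)) \<le> \<epsilon> * \<bar>h\<bar>"
      using unif_deriv[OF K V F tK \<epsilon>] by blast
    define d where "d = min \<delta>0 \<delta>1"
    have "d > 0" using d0 \<delta>1 by (simp add: d_def)
    moreover have "norm (fcalc E T (\<lambda>z. F (complex_of_real y * z)) - fcalc E T (\<lambda>z. F (complex_of_real t * z)) - (y - t) *\<^sub>R D) \<le> e * norm (y - t)"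
      if y: "norm (y - t) < d" for y
    proof -
      define h where "h = y - t"
      have yth: "y = t + h" by (simp add: h_def)
      have yK: "\<forall>z\<in>K. complex_of_real y * z \<in> V" using sK y by (auto simp: K_def d_def)
      let ?a = "cutK K (\<lambda>z. F (complex_of_real y * z))"
      let ?b = "cutK K (\<lambda>z. F (complex_of_real t * z))"
      let ?m = "\<lambda>z. cutK K (\<lambda>z. z) z * cutK K (\<lambda>z. deriv F (complex_of_real t * z)) z"
      have bm: "bb ?m" by (intro bb_mult bbid bbpsi)
      have TD: "D = spectral_integral E ?m"
        unfolding D_def using I_mult[OF bbid bbpsi] T_id fcK by metis
      have "fcalc E T (\<lambda>z. F (complex_of_real y * z)) - fcalc E T (\<lambda>z. F (complex_of_real t * z)) - h *\<^sub>R D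
          = spectral_integral E ?a - spectral_integral E ?b - spectral_integral E (\<lambda>z. complex_of_real h * ?m z)"
        by (simp only: fcK TD I_scale[OF bm])
      also have "\<dots> = spectral_integral E (\<lambda>z. (?a z - ?b z) - complex_of_real h * ?m z)"
        using I_diff[OF bb_diff[OF bbphi[OF yK] bbphi[OF tK]] bb_scale[OF bm]] I_diff[OF bbphi[OF yK] bbphi[OF tK]]
        by simp
      also have "(\<lambda>z. (?a z - ?b z) - complex_of_real h * ?m z) = cutK K (\<lambda>z. F (complex_of_real (t + h) * z) - F (complex_of_real t * z) - complex_of_real h * z * deriv F (complex_of_real t * z))"
        by (rule ext) (simp add: cutK_def yth)
      finally have eq: "fcalc E T (\<lambda>z. F (complex_of_real y * z)) - fcalc E T (\<lambda>z. F (complex_of_real t * z)) - h *\<^sub>R D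
          = spectral_integral E (cutK K (\<lambda>z. F (complex_of_real (t + h) * z) - F (complex_of_real t * z) - complex_of_real h * z * deriv F (complex_of_real t * z)))" .
      have bnd: "cmod (cutK K (\<lambda>z. F (complex_of_real (t + h) * z) - F (complex_of_real t * z) - complex_of_real h * z * deriv F (complex_of_real t * z)) z) \<le> \<epsilon> * \<bar>h\<bar>" for z
        using est[of h] y \<epsilon> by (auto simp: cutK_def h_def d_def)
      have bbc: "bb (cutK K (\<lambda>z. F (complex_of_real (t + h) * z) - F (complex_of_real t * z) - complex_of_real h * z * deriv F (complex_of_real t * z)))"
      proof -
        have "cutK K (\<lambda>z. F (complex_of_real (t + h) * z) - F (complex_of_real t * z) - complex_of_real h * z * deriv F (complex_of_real t * z))
            = (\<lambda>z. (?a z - ?b z) - complex_of_real h * ?m z)"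
          by (rule ext) (simp add: cutK_def yth)
        then show ?thesis using bb_diff[OF bb_diff[OF bbphi[OF yK] bbphi[OF tK]] bb_scale[OF bm]] by simp
      qed
      have "norm (fcalc E T (\<lambda>z. F (complex_of_real y * z)) - fcalc E T (\<lambda>z. F (complex_of_real t * z)) - h *\<^sub>R D) \<le> 4 * EM * (\<epsilon> * \<bar>h\<bar>)"
        unfolding eq by (rule I_bound[OF bbc bnd])
      also have "\<dots> = e * norm (y - t)" using EM(1) by (simp add: \<epsilon>_def h_def)
      finally show ?thesis by (simp add: h_def)
    qed
    ultimately show "\<exists>d>0. \<forall>y. norm (y - t) < d \<longrightarrow>
        norm (fcalc E T (\<lambda>z. F (complex_of_real y * z)) - fcalc E T (\<lambda>z. F (complex_of_real t * z)) - (y - t) *\<^sub>R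
          (T o\<^sub>L fcalc E T (\<lambda>z. deriv F (complex_of_real t * z)))) \<le> e * norm (y - t)"
      unfolding D_def by blast
  qed
qed

end

lemma Cp_cont: "Cp k W f \<Longrightarrow> continuous_on W f"
  by (cases k) auto

lemma Cp_mono: "Cp (Suc k) W f \<Longrightarrow> Cp k W f"
proof (induction k arbitrary: f)
  case 0 then show ?case by simp
next
  case (Suc k)
  then show ?case by (simp del: Cp.simps(1))
qed

lemma ev_line:
  fixes x :: "real^'n::finite"
  assumes W: "open W" and x: "x \<in> W"
  shows "\<forall>\<^sub>F h in nhds 0. x + h *\<^sub>R axis i 1 \<in> W"
proof -
  have "open ((\<lambda>h::real. x + h *\<^sub>R axis i 1) -` W)"
    by (rule open_vimage[OF W]) (intro continuous_intros)
  moreover have "(0::real) \<in> (\<lambda>h. x + h *\<^sub>R axis i 1) -` W" using x by simp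
  ultimately show ?thesis unfolding eventually_nhds by blast
qed

lemma partial_cong:
  fixes x :: "real^'n::finite"
  assumes W: "open W" and x: "x \<in> W" and eq: "\<forall>y\<in>W. f y = g y"
  shows "partial i f x = partial i g x"
  unfolding partial_def
proof (rule vector_derivative_cong_eq)
  show "\<forall>\<^sub>F h in nhds 0. h \<in> UNIV \<longrightarrow> f (x + h *\<^sub>R axis i 1) = g (x + h *\<^sub>R axis i 1)"
    by (rule eventually_mono[OF ev_line[OF W x, of i]]) (use eq in auto)
qed auto

lemma line_diff_cong:
  fixes x :: "real^'n::finite"
  assumes W: "open W" and x: "x \<in> W" and eq: "\<forall>y\<in>W. f y = g y"
    and d: "(\<lambda>h. f (x + h *\<^sub>R axis i 1)) differentiable (at 0)"
  shows "(\<lambda>h. g (x + h *\<^sub>R axis i 1)) differentiable (at 0)"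
proof -
  have ev: "\<forall>\<^sub>F h in nhds 0. h \<in> UNIV \<longrightarrow> f (x + h *\<^sub>R axis i 1) = g (x + h *\<^sub>R axis i 1)"
    by (rule eventually_mono[OF ev_line[OF W x, of i]]) (use eq in auto)
  have "((\<lambda>h. f (x + h *\<^sub>R axis i 1)) has_vector_derivative partial i f x) (at 0)"
    using d unfolding partial_def vector_derivative_works .
  then have "((\<lambda>h. g (x + h *\<^sub>R axis i 1)) has_vector_derivative partial i f x) (at 0)"
    using has_vector_derivative_cong_ev[OF ev] x eq by simp
  then show ?thesis by (rule differentiableI_vector)
qed

lemma Cp_cong:
  fixes f g :: "real^'n::finite \<Rightarrow> 'b::real_normed_vector"
  assumes "open W"
  shows "Cp k W f \<Longrightarrow> \<forall>x\<in>W. f x = g x \<Longrightarrow> Cp k W g"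
proof (induction k arbitrary: f g)
  case 0 then show ?case using continuous_on_cong by force
next
  case (Suc k)
  have c: "continuous_on W g" using Suc.prems continuous_on_cong by force
  have d: "\<forall>x\<in>W. \<forall>i. (\<lambda>h. g (x + h *\<^sub>R axis i 1)) differentiable (at 0)"
  proof (intro ballI allI)
    fix x i assume x: "x \<in> W"
    show "(\<lambda>h. g (x + h *\<^sub>R axis i 1)) differentiable (at 0)"
      by (rule line_diff_cong[OF assms x]) (use Suc.prems x in auto)
  qed
  have p: "Cp k W (partial i g)" for i
  proof -
    have "Cp k W (partial i f)" using Suc.prems by simp
    moreover have "\<forall>x\<in>W. partial i f x = partial i g x" using partial_cong[OF assms] Suc.prems by blast
    ultimately show ?thesis by (rule Suc.IH)
  qed
  show ?case using c d p by simp
qed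

lemma line_hvd:
  assumes "(\<lambda>h. f (x + h *\<^sub>R axis i 1)) differentiable (at 0)"
  shows "((\<lambda>h. f (x + h *\<^sub>R axis i 1)) has_vector_derivative partial i f x) (at 0)"
  using assms unfolding partial_def vector_derivative_works .

lemma Cp_add:
  fixes f g :: "real^'n::finite \<Rightarrow> 'b::real_normed_vector"
  assumes W: "open W"
  shows "Cp k W f \<Longrightarrow> Cp k W g \<Longrightarrow> Cp k W (\<lambda>x. f x + g x)"
proof (induction k arbitrary: f g)
  case 0 then show ?case by (auto intro: continuous_on_add)
next
  case (Suc k)
  have hv: "((\<lambda>h. f (x + h *\<^sub>R axis i 1) + g (x + h *\<^sub>R axis i 1)) has_vector_derivative partial i f x + partial i g x) (at 0)"
    if "x \<in> W" for x i
    using Suc.prems that by (intro has_vector_derivative_add line_hvd) auto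
  have c: "continuous_on W (\<lambda>x. f x + g x)" using Suc.prems by (auto intro: continuous_on_add)
  have d: "\<forall>x\<in>W. \<forall>i. (\<lambda>h. f (x + h *\<^sub>R axis i 1) + g (x + h *\<^sub>R axis i 1)) differentiable (at 0)"
    using hv differentiableI_vector by blast
  have p: "Cp k W (partial i (\<lambda>x. f x + g x))" for i
  proof (rule Cp_cong[OF W])
    show "Cp k W (\<lambda>x. partial i f x + partial i g x)" using Suc.prems by (intro Suc.IH) auto
    show "\<forall>x\<in>W. partial i f x + partial i g x = partial i (\<lambda>x. f x + g x) x"
      using hv vector_derivative_at unfolding partial_def by (metis (no_types, lifting))
  qed
  show ?case using c d p by simp
qed

lemma Cp_linear:
  fixes f :: "real^'n::finite \<Rightarrow> 'b::real_normed_vector" and L :: "'b \<Rightarrow> 'c::real_normed_vector"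
  assumes W: "open W" and L: "bounded_linear L"
  shows "Cp k W f \<Longrightarrow> Cp k W (\<lambda>x. L (f x))"
proof (induction k arbitrary: f)
  case 0 then show ?case using L by (auto intro: bounded_linear.continuous_on continuous_on_id)
next
  case (Suc k)
  have hv: "((\<lambda>h. L (f (x + h *\<^sub>R axis i 1))) has_vector_derivative L (partial i f x)) (at 0)"
    if "x \<in> W" for x i
    using Suc.prems that by (intro bounded_linear.has_vector_derivative[OF L] line_hvd) auto
  have c: "continuous_on W (\<lambda>x. L (f x))" using Suc.prems L by (auto intro: bounded_linear.continuous_on)
  have d: "\<forall>x\<in>W. \<forall>i. (\<lambda>h. L (f (x + h *\<^sub>R axis i 1))) differentiable (at 0)"
    using hv differentiableI_vector by blast
  have p: "Cp k W (partial i (\<lambda>x. L (f x)))" for i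
  proof (rule Cp_cong[OF W])
    show "Cp k W (\<lambda>x. L (partial i f x))" using Suc.prems by (intro Suc.IH) auto
    show "\<forall>x\<in>W. L (partial i f x) = partial i (\<lambda>x. L (f x)) x"
      using hv vector_derivative_at unfolding partial_def by (metis (no_types, lifting))
  qed
  show ?case using c d p by simp
qed

lemma Cp_scaleR:
  fixes a :: "real^'n::finite \<Rightarrow> real" and b :: "real^'n \<Rightarrow> 'b::real_normed_vector"
  assumes W: "open W"
  shows "Cp k W a \<Longrightarrow> Cp k W b \<Longrightarrow> Cp k W (\<lambda>x. a x *\<^sub>R b x)"
proof (induction k arbitrary: a b)
  case 0 then show ?case by (auto intro: continuous_on_scaleR)
next
  case (Suc k)
  have hv: "((\<lambda>h. a (x + h *\<^sub>R axis i 1) *\<^sub>R b (x + h *\<^sub>R axis i 1)) has_vector_derivative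
      a x *\<^sub>R partial i b x + partial i a x *\<^sub>R b x) (at 0)"
    if "x \<in> W" for x i
  proof -
    have ha: "((\<lambda>h. a (x + h *\<^sub>R axis i 1)) has_real_derivative partial i a x) (at 0)"
      using Suc.prems that line_hvd[of a x i] by (simp add: has_real_derivative_iff_has_vector_derivative)
    have hb: "((\<lambda>h. b (x + h *\<^sub>R axis i 1)) has_vector_derivative partial i b x) (at 0)"
      using Suc.prems that by (intro line_hvd) auto
    show ?thesis using has_vector_derivative_scaleR[OF ha hb] by simp
  qed
  have c: "continuous_on W (\<lambda>x. a x *\<^sub>R b x)" using Suc.prems by (auto intro: continuous_on_scaleR)
  have d: "\<forall>x\<in>W. \<forall>i. (\<lambda>h. a (x + h *\<^sub>R axis i 1) *\<^sub>R b (x + h *\<^sub>R axis i 1)) differentiable (at 0)"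
    using hv differentiableI_vector by blast
  have p: "Cp k W (partial i (\<lambda>x. a x *\<^sub>R b x))" for i
  proof (rule Cp_cong[OF W])
    have "Cp k W (\<lambda>x. a x *\<^sub>R partial i b x)" using Suc.prems Cp_mono by (intro Suc.IH) auto
    moreover have "Cp k W (\<lambda>x. partial i a x *\<^sub>R b x)" using Suc.prems Cp_mono by (intro Suc.IH) auto
    ultimately show "Cp k W (\<lambda>x. a x *\<^sub>R partial i b x + partial i a x *\<^sub>R b x)" by (rule Cp_add[OF W])
    show "\<forall>x\<in>W. a x *\<^sub>R partial i b x + partial i a x *\<^sub>R b x = partial i (\<lambda>x. a x *\<^sub>R b x) x"
      using hv vector_derivative_at unfolding partial_def by (metis (no_types, lifting))
  qed
  show ?case using c d p by simp
qed

context sto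
begin

lemma Phi_deriv_l:
  assumes V: "open V" "op_spectrum T \<subseteq> V" and F: "F holomorphic_on V"
    and l: "\<forall>t::real. ereal \<bar>t\<bar> < l \<longrightarrow> (\<forall>z\<in>V. complex_of_real t * z \<in> V)"
    and t: "ereal \<bar>t\<bar> < l"
  shows "((\<lambda>s. fcalc E T (\<lambda>z. F (complex_of_real s * z))) has_vector_derivative
           (T o\<^sub>L fcalc E T (\<lambda>z. deriv F (complex_of_real t * z)))) (at t)"
proof -
  obtain r where r: "ereal \<bar>t\<bar> < ereal r" "ereal r < l" using ereal_dense2[OF t] by blast
  define \<delta>0 where "\<delta>0 = r - \<bar>t\<bar>"
  have d0: "\<delta>0 > 0" using r(1) by (simp add: \<delta>0_def)
  have "\<forall>s. \<bar>s - t\<bar> < \<delta>0 \<longrightarrow> (\<forall>z\<in>op_spectrum T. complex_of_real s * z \<in> V)"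
  proof (intro allI impI ballI)
    fix s z assume s: "\<bar>s - t\<bar> < \<delta>0" and z: "z \<in> op_spectrum T"
    have "\<bar>s\<bar> < r" using s by (simp add: \<delta>0_def)
    then have "ereal \<bar>s\<bar> < ereal r" by simp
    then have "ereal \<bar>s\<bar> < l" using r(2) by (rule less_trans)
    then show "complex_of_real s * z \<in> V" using l z V(2) by blast
  qed
  then show ?thesis by (rule Phi_deriv[OF V(1) F d0])
qed

lemma partial_Phi:
  assumes V: "open V" "op_spectrum T \<subseteq> V" and F: "F holomorphic_on V"
    and l: "\<forall>t::real. ereal \<bar>t\<bar> < l \<longrightarrow> (\<forall>z\<in>V. complex_of_real t * z \<in> V)"
    and gx: "ereal \<bar>g x\<bar> < l"
    and d: "(\<lambda>h. g (x + h *\<^sub>R axis i 1)) differentiable (at 0)"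
  shows "((\<lambda>h. fcalc E T (\<lambda>z. F (complex_of_real (g (x + h *\<^sub>R axis i 1)) * z))) has_vector_derivative
          partial i g x *\<^sub>R (T o\<^sub>L fcalc E T (\<lambda>z. deriv F (complex_of_real (g x) * z)))) (at 0)"
proof -
  have 1: "((\<lambda>h. g (x + h *\<^sub>R axis i 1)) has_vector_derivative partial i g x) (at 0)"
    by (rule line_hvd[OF d])
  have 2: "((\<lambda>s. fcalc E T (\<lambda>z. F (complex_of_real s * z))) has_vector_derivative
           (T o\<^sub>L fcalc E T (\<lambda>z. deriv F (complex_of_real (g (x + 0 *\<^sub>R axis i 1)) * z)))) (at (g (x + 0 *\<^sub>R axis i 1)))"
    using Phi_deriv_l[OF V F l] gx by simp
  show ?thesis using vector_diff_chain_at[OF 1 2] by (simp add: o_def)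
qed

lemma Phi_cont:
  assumes V: "open V" "op_spectrum T \<subseteq> V" and F: "F holomorphic_on V"
    and l: "\<forall>t::real. ereal \<bar>t\<bar> < l \<longrightarrow> (\<forall>z\<in>V. complex_of_real t * z \<in> V)"
  shows "continuous_on {t. ereal \<bar>t\<bar> < l} (\<lambda>s. fcalc E T (\<lambda>z. F (complex_of_real s * z)))"
  by (rule continuous_at_imp_continuous_on)
     (use Phi_deriv_l[OF V F l] has_vector_derivative_continuous in blast)

lemma Cp_Phi:
  assumes V: "open V" "op_spectrum T \<subseteq> V"
    and l: "\<forall>t::real. ereal \<bar>t\<bar> < l \<longrightarrow> (\<forall>z\<in>V. complex_of_real t * z \<in> V)"
    and W: "open W"
  shows "\<forall>F g. F holomorphic_on V \<longrightarrow> Cp k W g \<longrightarrow> (\<forall>x\<in>W. ereal \<bar>g x\<bar> < l) \<longrightarrow>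
           Cp k W (\<lambda>x. fcalc E T (\<lambda>z. F (complex_of_real (g x) * z)))"
proof (induction k)
  have cont: "continuous_on W (\<lambda>x. fcalc E T (\<lambda>z. F (complex_of_real (g x) * z)))"
    if F: "F holomorphic_on V" and g: "continuous_on W g" and gl: "\<forall>x\<in>W. ereal \<bar>g x\<bar> < l" for F g
    by (rule continuous_on_compose2[OF Phi_cont[OF V F l] g]) (use gl in auto)
  {
    case 0
    show ?case using cont by simp
  next
    case (Suc k)
    show ?case
    proof (intro allI impI)
      fix F g assume F: "F holomorphic_on V" and g: "Cp (Suc k) W g" and gl: "\<forall>x\<in>W. ereal \<bar>g x\<bar> < l"
      have hv: "((\<lambda>h. fcalc E T (\<lambda>z. F (complex_of_real (g (x + h *\<^sub>R axis i 1)) * z))) has_vector_derivative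
          partial i g x *\<^sub>R (T o\<^sub>L fcalc E T (\<lambda>z. deriv F (complex_of_real (g x) * z)))) (at 0)"
        if x: "x \<in> W" for x i
        using g gl x by (intro partial_Phi[OF V F l]) auto
      have c: "continuous_on W (\<lambda>x. fcalc E T (\<lambda>z. F (complex_of_real (g x) * z)))"
        using cont[OF F _ gl] g Cp_cont by blast
      have d: "\<forall>x\<in>W. \<forall>i. (\<lambda>h. fcalc E T (\<lambda>z. F (complex_of_real (g (x + h *\<^sub>R axis i 1)) * z))) differentiable (at 0)"
        using hv differentiableI_vector by blast
      have p: "Cp k W (partial i (\<lambda>x. fcalc E T (\<lambda>z. F (complex_of_real (g x) * z))))" for i
      proof (rule Cp_cong[OF W])
        have F': "deriv F holomorphic_on V" using holomorphic_deriv[OF F V(1)] .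
        have "Cp k W (\<lambda>x. fcalc E T (\<lambda>z. deriv F (complex_of_real (g x) * z)))"
          using Suc.IH F' Cp_mono[OF g] gl by blast
        then have "Cp k W (\<lambda>x. T o\<^sub>L fcalc E T (\<lambda>z. deriv F (complex_of_real (g x) * z)))"
          by (rule Cp_linear[OF W bounded_bilinear.bounded_linear_right[OF bounded_bilinear_blinfun_compose]])
        moreover have "Cp k W (partial i g)" using g by simp
        ultimately show "Cp k W (\<lambda>x. partial i g x *\<^sub>R (T o\<^sub>L fcalc E T (\<lambda>z. deriv F (complex_of_real (g x) * z))))"
          by (intro Cp_scaleR[OF W])
        show "\<forall>x\<in>W. partial i g x *\<^sub>R (T o\<^sub>L fcalc E T (\<lambda>z. deriv F (complex_of_real (g x) * z)))
            = partial i (\<lambda>x. fcalc E T (\<lambda>z. F (complex_of_real (g x) * z))) x"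
          using hv vector_derivative_at unfolding partial_def by (metis (no_types, lifting))
      qed
      show "Cp (Suc k) W (\<lambda>x. fcalc E T (\<lambda>z. F (complex_of_real (g x) * z)))"
        using c d p by simp
    qed
  }
qed

end

theorem mainTheorem3:
  fixes T :: "'g::{complex_normed_vector,banach} \<Rightarrow>\<^sub>L 'g"
    and E :: "complex set \<Rightarrow> ('g \<Rightarrow>\<^sub>L 'g)"
    and V :: "complex set" and l :: ereal and F :: "complex \<Rightarrow> complex"
    and p :: nat and W :: "(real^'n::finite) set" and g :: "real^'n \<Rightarrow> real"
  assumes T: "scalar_type_resolution T E"
    and V: "open V" "op_spectrum T \<subseteq> V"
    and l: "l > 0" "\<forall>t::real. ereal \<bar>t\<bar> < l \<longrightarrow> (\<forall>z\<in>V. complex_of_real t * z \<in> V)"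
    and F: "F analytic_on V"
    and p: "p \<ge> 1"
    and W: "open W"
    and g: "Cp p W g" "\<forall>x\<in>W. ereal \<bar>g x\<bar> < l"
  shows "Cp p W (\<lambda>x. fcalc E T (\<lambda>z. F (complex_of_real (g x) * z)))
       \<and> (\<forall>i. \<forall>x\<in>W. partial i (\<lambda>x. fcalc E T (\<lambda>z. F (complex_of_real (g x) * z))) x
              = partial i g x *\<^sub>R (T o\<^sub>L fcalc E T (\<lambda>z. deriv F (complex_of_real (g x) * z))))"
proof -
  interpret sto E T
    using T unfolding scalar_type_resolution_def by unfold_locales auto
  have Fh: "F holomorphic_on V" using F analytic_on_open[OF V(1)] by blast
  have 1: "Cp p W (\<lambda>x. fcalc E T (\<lambda>z. F (complex_of_real (g x) * z)))"
    using Cp_Phi[OF V l(2) W] Fh g by blast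
  obtain q where q: "p = Suc q" using p by (cases p) auto
  have 2: "partial i (\<lambda>x. fcalc E T (\<lambda>z. F (complex_of_real (g x) * z))) x
      = partial i g x *\<^sub>R (T o\<^sub>L fcalc E T (\<lambda>z. deriv F (complex_of_real (g x) * z)))" if x: "x \<in> W" for i x
  proof -
    have d: "(\<lambda>h. g (x + h *\<^sub>R axis i 1)) differentiable (at 0)" using g(1) x q by simp
    show ?thesis
      using partial_Phi[OF V Fh l(2) _ d] g(2) x vector_derivative_at unfolding partial_def by blast
  qed
  show ?thesis using 1 2 by blast
qed

end
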